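(* Let $\mathbf{L}=U^{\oplus3}\oplus[-2]^{\oplus2}$ and let $G\subset\mathrm{O}(\mathbf{L})$ be a subgroup with $|G|=2$ whose image $G^{\sharp}$ in $\mathrm{O}(\mathbf{L}^{\sharp})$ is trivial. Let $H\subset\mathbf{L}^{\sharp}$ be the embedding subgroup of the primitive embedding $\mathbf{L}_G\hookrightarrow\mathbf{L}$. Then: (a) if $H$ is trivial, $l((\mathbf{L}^G)^{\sharp})=l((\mathbf{L}_G)^{\sharp})+2$; (b) if $H\cong\mathbb{Z}/2\mathbb{Z}$, $l((\mathbf{L}^G)^{\sharp})=l((\mathbf{L}_G)^{\sharp})$; (c) if $H\cong(\mathbb{Z}/2\mathbb{Z})^{\oplus2}$, $l((\mathbf{L}^G)^{\sharp})=l((\mathbf{L}_G)^{\sharp})-2$.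
   Context: $U$ is the hyperbolic plane, $[n]$ the rank one lattice generated by a vector of square $n$. For a lattice $L$, $L^{\sharp}=L^*/L$ is the discriminant group and $l(L^{\sharp})$ its length (minimal number of generators). $G^{\sharp}$ is the image of $G$ under $\mathrm{O}(\mathbf{L})\to\mathrm{O}(\mathbf{L}^{\sharp})$. $\mathbf{L}^G$ is the invariant sublattice and $\mathbf{L}_G=(\mathbf{L}^G)^{\perp}$ the coinvariant sublattice. For a primitive sublattice $S\subset\mathbf{L}$, the embedding subgroup is $H=(\mathbf{L}^*\cap(S\otimes\mathbb{Q}))/S\subset\mathbf{L}^*/\mathbf{L}=\mathbf{L}^{\sharp}$ (the subgroup of $\mathbf{L}^{\sharp}$ in Nikulin's description of primitive embeddings; it satisfies $|\det(S^{\perp})|=|\det\mathbf{L}|\cdot|\det S|/|H|^2$). *)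

theory Defs
  imports "HOL-Analysis.Analysis" "HOL-Algebra.Elementary_Groups"
begin

section \<open>The lattice L = U^3 + [-2]^2, realised as Z^8 inside Q^8\<close>

type_synonym qvec = "rat ^ 8"
type_synonym imat = "int ^ 8 ^ 8"

text \<open>Gram matrix of U (+) U (+) U (+) [-2] (+) [-2] in the standard basis e_0,...,e_7.\<close>
definition gramL :: imat where
  "gramL = (\<chi> i j.
      if (i = 0 \<and> j = 1) \<or> (i = 1 \<and> j = 0) \<or> (i = 2 \<and> j = 3) \<or> (i = 3 \<and> j = 2)
         \<or> (i = 4 \<and> j = 5) \<or> (i = 5 \<and> j = 4) then 1
      else if (i = 6 \<and> j = 6) \<or> (i = 7 \<and> j = 7) then -2 else 0)"

text \<open>The bilinear form, extended Q-bilinearly to Q^8 = L (x) Q.\<close>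
definition bform :: "qvec \<Rightarrow> qvec \<Rightarrow> rat" where
  "bform x y = (\<Sum>i\<in>UNIV. \<Sum>j\<in>UNIV. x $ i * of_int (gramL $ i $ j) * y $ j)"

definition latL :: "qvec set" where
  "latL = {x. \<forall>i. x $ i \<in> \<int>}"

definition OL :: "imat set" where
  "OL = {M. transpose M ** gramL ** M = gramL}"

definition is_subgroup_OL :: "imat set \<Rightarrow> bool" where
  "is_subgroup_OL G \<longleftrightarrow> G \<subseteq> OL \<and> mat 1 \<in> G \<and> (\<forall>a\<in>G. \<forall>b\<in>G. a ** b \<in> G)
      \<and> (\<forall>a\<in>G. \<exists>b\<in>G. a ** b = mat 1 \<and> b ** a = mat 1)"

definition act :: "imat \<Rightarrow> qvec \<Rightarrow> qvec" where
  "act M x = map_matrix of_int M *v x"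

definition qspan :: "qvec set \<Rightarrow> qvec set" where
  "qspan S = {x. \<exists>cs::(rat \<times> qvec) list. (\<forall>p\<in>set cs. snd p \<in> S)
                  \<and> x = sum_list (map (\<lambda>p. (\<chi> i. fst p * snd p $ i)) cs)}"

definition zspan :: "qvec set \<Rightarrow> qvec set" where
  "zspan S = {x. \<exists>cs::(int \<times> qvec) list. (\<forall>p\<in>set cs. snd p \<in> S)
                  \<and> x = sum_list (map (\<lambda>p. (\<chi> i. of_int (fst p) * snd p $ i)) cs)}"

text \<open>Dual lattice S^* = Hom(S,Z) viewed inside S (x) Q.\<close>
definition dual :: "qvec set \<Rightarrow> qvec set" where
  "dual S = {x \<in> qspan S. \<forall>s\<in>S. bform x s \<in> \<int>}"

text \<open>Length l(S^#) of the discriminant group S^# = S^*/S: minimal number of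
  elements of S^* which together with S generate S^*.\<close>
definition disc_length :: "qvec set \<Rightarrow> nat" where
  "disc_length S = (LEAST k. \<exists>ys. length ys = k \<and> set ys \<subseteq> dual S
                        \<and> dual S = zspan (S \<union> set ys))"

definition coset :: "qvec \<Rightarrow> qvec set \<Rightarrow> qvec set" where
  "coset x S = (\<lambda>s. x + s) ` S"

definition quot_grp :: "qvec set \<Rightarrow> qvec set \<Rightarrow> qvec set monoid" where
  "quot_grp A S = \<lparr> carrier = (\<lambda>x. coset x S) ` A,
                    monoid.mult = (\<lambda>P Q. {p + q | p q. p \<in> P \<and> q \<in> Q}),
                    one = S \<rparr>"

definition invL :: "imat set \<Rightarrow> qvec set" where
  "invL G = {x \<in> latL. \<forall>g\<in>G. act g x = x}"

definition coinvL :: "imat set \<Rightarrow> qvec set" where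
  "coinvL G = {x \<in> latL. \<forall>y\<in>invL G. bform x y = 0}"

text \<open>G^# trivial: every element of G acts trivially on L^# = L^*/L.\<close>
definition trivial_on_disc :: "imat set \<Rightarrow> bool" where
  "trivial_on_disc G \<longleftrightarrow> (\<forall>g\<in>G. \<forall>x\<in>dual latL. act g x - x \<in> latL)"

text \<open>Embedding subgroup H = (L^* \<inter> (S (x) Q))/S of a primitive sublattice S.\<close>
definition emb_grp :: "qvec set \<Rightarrow> qvec set monoid" where
  "emb_grp S = quot_grp (dual latL \<inter> qspan S) S"

end

theory Submission
  imports Defs
begin

definition sg :: "'a::ab_group_add set \<Rightarrow> bool" where
  "sg A \<longleftrightarrow> 0 \<in> A \<and> (\<forall>x\<in>A. \<forall>y\<in>A. x + y \<in> A) \<and> (\<forall>x\<in>A. -x \<in> A)"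

definition cst :: "'a::ab_group_add \<Rightarrow> 'a set \<Rightarrow> 'a set" where
  "cst x Y = (\<lambda>y. x + y) ` Y"

definition cosq :: "'a::ab_group_add set \<Rightarrow> 'a set \<Rightarrow> 'a set set" where
  "cosq Y X = (\<lambda>x. cst x Y) ` X"

definition rep :: "'a set \<Rightarrow> 'a" where "rep c = (SOME x. x \<in> c)"

lemma sg0: "sg A \<Longrightarrow> 0 \<in> A" unfolding sg_def by blast
lemma sg_add: "sg A \<Longrightarrow> x \<in> A \<Longrightarrow> y \<in> A \<Longrightarrow> x + y \<in> A" unfolding sg_def by blast
lemma sg_uminus: "sg A \<Longrightarrow> x \<in> A \<Longrightarrow> -x \<in> A" unfolding sg_def by blast
lemma sg_diff: "sg A \<Longrightarrow> x \<in> A \<Longrightarrow> y \<in> A \<Longrightarrow> x - y \<in> A"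
  using sg_add[of A x "-y"] sg_uminus[of A y] by simp
lemmas sgD = sg0 sg_add sg_uminus sg_diff

lemma cst_mem: "sg Y \<Longrightarrow> x \<in> cst x Y"
  unfolding cst_def using sgD(1) by force

lemma cst_eq: assumes "sg Y" shows "cst x Y = cst x' Y \<longleftrightarrow> x - x' \<in> Y"
proof
  assume "cst x Y = cst x' Y"
  then have "x \<in> cst x' Y" using cst_mem[OF assms] by metis
  then obtain y where "y \<in> Y" "x = x' + y" unfolding cst_def by auto
  then show "x - x' \<in> Y" by simp
next
  assume h: "x - x' \<in> Y"
  have "cst a Y \<subseteq> cst b Y" if "a - b \<in> Y" for a b
  proof
    fix z assume "z \<in> cst a Y"
    then obtain y where y: "y \<in> Y" "z = a + y" unfolding cst_def by auto
    then have "(a - b) + y \<in> Y" using that sgD(2)[OF assms] by blast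
    moreover have "z = b + ((a - b) + y)" using y by simp
    ultimately show "z \<in> cst b Y" unfolding cst_def by blast
  qed
  note sub = this
  have "x' - x \<in> Y" using sgD(3)[OF assms h] by simp
  then show "cst x Y = cst x' Y"
    using h sub[of x x'] sub[of x' x] by (rule_tac subset_antisym)
qed

lemma rep_cst: assumes "sg Y" shows "\<exists>y\<in>Y. rep (cst v Y) = v + y"
proof -
  have "rep (cst v Y) \<in> cst v Y" unfolding rep_def by (rule someI, rule cst_mem[OF assms])
  then show ?thesis unfolding cst_def by auto
qed

lemma rep_cst_diff: assumes "sg Y" shows "rep (cst v Y) - v \<in> Y"
  using rep_cst[OF assms, of v] by (metis add_diff_cancel_left')

lemma cst_rep: assumes "sg Y" "c \<in> cosq Y X" shows "c = cst (rep c) Y"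
proof -
  obtain x where x: "c = cst x Y" "x \<in> X" using assms(2) unfolding cosq_def by auto
  have "rep c - x \<in> Y" using rep_cst_diff[OF assms(1), of x] x(1) by simp
  then have "cst (rep c) Y = cst x Y" using cst_eq[OF assms(1)] by blast
  then show ?thesis using x(1) by simp
qed

lemma rep_in: assumes "sg Y" "sg X" "Y \<subseteq> X" "c \<in> cosq Y X" shows "rep c \<in> X"
proof -
  obtain x where x: "c = cst x Y" "x \<in> X" using assms(4) unfolding cosq_def by auto
  obtain y where "y \<in> Y" "rep c = x + y" using rep_cst[OF assms(1)] x by blast
  then show ?thesis using x assms sgD(2)[OF assms(2), of x y] by auto
qed

lemma cosq_mono: "X \<subseteq> X' \<Longrightarrow> cosq Y X \<subseteq> cosq Y X'"
  unfolding cosq_def by auto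

lemma bij_same_kernel:
  assumes "\<forall>x\<in>X. \<forall>x'\<in>X. F x = F x' \<longleftrightarrow> G x = G x'"
  shows "bij_betw (\<lambda>v. F (inv_into X G v)) (G ` X) (F ` X)"
proof -
  have key: "F (inv_into X G (G x)) = F x" if "x \<in> X" for x
  proof -
    have "inv_into X G (G x) \<in> X" "G (inv_into X G (G x)) = G x"
      using that by (auto intro: inv_into_into f_inv_into_f)
    then show ?thesis using assms that by blast
  qed
  show ?thesis unfolding bij_betw_def
  proof
    show "inj_on (\<lambda>v. F (inv_into X G v)) (G ` X)"
      unfolding inj_on_def using key assms by auto
    show "(\<lambda>v. F (inv_into X G v)) ` G ` X = F ` X"
      using key by (auto simp: image_iff)
  qed
qed

lemma card_same_kernel:
  assumes "\<forall>x\<in>X. \<forall>x'\<in>X. F x = F x' \<longleftrightarrow> G x = G x'"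
  shows "card (F ` X) = card (G ` X)" "finite (F ` X) \<longleftrightarrow> finite (G ` X)"
  using bij_betw_same_card[OF bij_same_kernel[OF assms]] bij_betw_finite[OF bij_same_kernel[OF assms]]
  by simp_all

lemma tower:
  assumes "sg Y" "sg Z" "sg X" "Y \<subseteq> Z" "Z \<subseteq> X"
  shows "card (cosq Y X) = card (cosq Z X) * card (cosq Y Z)"
proof -
  define G where "G x = (cst x Z, cst (x - rep (cst x Z)) Y)" for x
  have zz: "x - rep (cst x Z) \<in> Z" for x
    using rep_cst_diff[OF assms(2), of x] sgD(3)[OF assms(2)] by (metis minus_diff_eq)
  have ker: "\<forall>x\<in>X. \<forall>x'\<in>X. cst x Y = cst x' Y \<longleftrightarrow> G x = G x'"
  proof (intro ballI)
    fix x x' assume "x \<in> X" "x' \<in> X"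
    show "cst x Y = cst x' Y \<longleftrightarrow> G x = G x'"
    proof
      assume "cst x Y = cst x' Y"
      then have d: "x - x' \<in> Y" using cst_eq[OF assms(1)] by blast
      then have e: "cst x Z = cst x' Z" using cst_eq[OF assms(2)] assms(4) by blast
      have "(x - rep (cst x Z)) - (x' - rep (cst x' Z)) \<in> Y" using d e by simp
      then show "G x = G x'" unfolding G_def using e cst_eq[OF assms(1)] by simp
    next
      assume "G x = G x'"
      then have e: "cst x Z = cst x' Z" and f: "cst (x - rep (cst x Z)) Y = cst (x' - rep (cst x' Z)) Y"
        unfolding G_def by auto
      from f have "(x - rep (cst x Z)) - (x' - rep (cst x' Z)) \<in> Y" using cst_eq[OF assms(1)] by blast
      then show "cst x Y = cst x' Y" using e cst_eq[OF assms(1)] by simp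
    qed
  qed
  have img: "G ` X = cosq Z X \<times> cosq Y Z"
  proof
    show "G ` X \<subseteq> cosq Z X \<times> cosq Y Z" unfolding G_def cosq_def using zz by auto
    show "cosq Z X \<times> cosq Y Z \<subseteq> G ` X"
    proof
      fix p assume "p \<in> cosq Z X \<times> cosq Y Z"
      then obtain a z where az: "a \<in> X" "z \<in> Z" "p = (cst a Z, cst z Y)" unfolding cosq_def by auto
      define x where "x = rep (cst a Z) + z"
      have ra: "rep (cst a Z) \<in> X" using rep_in[OF assms(2) assms(3) assms(5)] az(1) unfolding cosq_def by blast
      have xX: "x \<in> X" unfolding x_def using ra az(2) assms(5) sgD(2)[OF assms(3), of "rep (cst a Z)" z] by blast
      have "cst x Z = cst (rep (cst a Z)) Z" unfolding x_def using cst_eq[OF assms(2)] az(2) by simp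
      also have "\<dots> = cst a Z" using cst_rep[OF assms(2), of "cst a Z" X] az(1) unfolding cosq_def by auto
      finally have cx: "cst x Z = cst a Z" .
      have "G x = (cst a Z, cst z Y)" unfolding G_def cx by (simp add: x_def)
      then have "G x = p" using az(3) by simp
      then show "p \<in> G ` X" using xX by blast
    qed
  qed
  have "card (cosq Y X) = card (G ` X)" unfolding cosq_def using card_same_kernel(1)[OF ker] by simp
  also have "\<dots> = card (cosq Z X) * card (cosq Y Z)" unfolding img by (simp add: card_cartesian_product)
  finally show ?thesis .
qed

lemma cosq_rep: assumes "sg Y" "sg X" "Y \<subseteq> X" "c \<in> cosq Y X"
  shows "rep c \<in> X" "c = cst (rep c) Y"
  using rep_in[OF assms] cst_rep[OF assms(1) assms(4)] by auto

lemma cst0: "cst 0 Y = Y" unfolding cst_def by simp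

lemma P_shift:
  assumes P1: "\<forall>a\<in>X. \<forall>b\<in>X. \<forall>c\<in>X. P (a+b) c = (P a c = P b c)"
    and P2: "\<forall>a\<in>X. \<forall>b\<in>X. P a b = P b a"
    and P3: "\<forall>a\<in>X. \<forall>y\<in>Y. P a y"
    and sX: "sg X" and YX: "Y \<subseteq> X" and a: "a \<in> X" and v: "v \<in> X" and y: "y \<in> Y"
  shows "P a (v + y) = P a v"
proof -
  have yX: "y \<in> X" using YX y by blast
  have vy: "v + y \<in> X" using sg_add[OF sX v yX] .
  have "P y a" using P2 P3 yX a y by blast
  have "P a (v + y) = P (v + y) a" using P2 a vy by blast
  also have "\<dots> = (P v a = P y a)" using P1 v yX a by blast
  also have "\<dots> = P v a" using \<open>P y a\<close> by simp
  also have "\<dots> = P a v" using P2 a v by blast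
  finally show ?thesis .
qed

definition ee :: "('a \<Rightarrow> 'a \<Rightarrow> bool) \<Rightarrow> 'a \<Rightarrow> 'a \<Rightarrow> int" where
  "ee P x y = (if P x y then 1 else -1)"

lemma flip_sum:
  assumes P1: "\<forall>a\<in>X. \<forall>b\<in>X. \<forall>c\<in>X. P (a+b) c = (P a c = P b c)"
    and P2: "\<forall>a\<in>X. \<forall>b\<in>X. P a b = P b a"
    and P3: "\<forall>a\<in>X. \<forall>y\<in>Y. P a y"
    and sX: "sg X" and sY: "sg Y" and sZ: "sg Z" and YZ: "Y \<subseteq> Z" and ZX: "Z \<subseteq> X"
    and x: "x \<in> X"
  shows "(\<Sum>d\<in>cosq Y Z. ee P x (rep d)) = (if \<forall>z\<in>Z. P x z then int (card (cosq Y Z)) else 0)"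
proof (cases "\<forall>z\<in>Z. P x z")
  case True
  have "ee P x (rep d) = 1" if "d \<in> cosq Y Z" for d
    using cosq_rep(1)[OF sY sZ YZ that] True unfolding ee_def by simp
  then show ?thesis using True by simp
next
  case False
  then obtain z0 where z0: "z0 \<in> Z" "\<not> P x z0" by blast
  define t where "t d = cst (z0 + rep d) Y" for d
  define t' where "t' d = cst (-z0 + rep d) Y" for d
  have t_in: "t d \<in> cosq Y Z" if "d \<in> cosq Y Z" for d
  proof -
    have "z0 + rep d \<in> Z" using sg_add[OF sZ z0(1) cosq_rep(1)[OF sY sZ YZ that]] .
    then show ?thesis unfolding t_def cosq_def by blast
  qed
  have t'_in: "t' d \<in> cosq Y Z" if "d \<in> cosq Y Z" for d
  proof -
    have "-z0 + rep d \<in> Z" using sg_add[OF sZ sg_uminus[OF sZ z0(1)] cosq_rep(1)[OF sY sZ YZ that]] .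
    then show ?thesis unfolding t'_def cosq_def by blast
  qed
  have tt': "t' (t d) = d" if "d \<in> cosq Y Z" for d
  proof -
    have "rep (t d) - (z0 + rep d) \<in> Y" unfolding t_def by (rule rep_cst_diff[OF sY])
    then have "(-z0 + rep (t d)) - rep d \<in> Y" by (simp add: algebra_simps)
    then have "t' (t d) = cst (rep d) Y" unfolding t'_def using cst_eq[OF sY] by blast
    then show ?thesis using cosq_rep(2)[OF sY sZ YZ that] by simp
  qed
  have t't: "t (t' d) = d" if "d \<in> cosq Y Z" for d
  proof -
    have "rep (t' d) - (-z0 + rep d) \<in> Y" unfolding t'_def by (rule rep_cst_diff[OF sY])
    then have "(z0 + rep (t' d)) - rep d \<in> Y" by (simp add: algebra_simps)
    then have "t (t' d) = cst (rep d) Y" unfolding t_def using cst_eq[OF sY] by blast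
    then show ?thesis using cosq_rep(2)[OF sY sZ YZ that] by simp
  qed
  have flip: "ee P x (rep (t d)) = - ee P x (rep d)" if "d \<in> cosq Y Z" for d
  proof -
    have rd: "rep d \<in> X" using cosq_rep(1)[OF sY sZ YZ that] ZX by blast
    have z0X: "z0 \<in> X" using z0(1) ZX by blast
    have s: "z0 + rep d \<in> X" using sg_add[OF sX z0X rd] .
    obtain y where y: "y \<in> Y" "rep (t d) = (z0 + rep d) + y"
      unfolding t_def using rep_cst[OF sY] by blast
    have YX: "Y \<subseteq> X" using YZ ZX by blast
    have "P x (rep (t d)) = P x (z0 + rep d)"
      unfolding y(2) by (rule P_shift[OF P1 P2 P3 sX YX x s y(1)])
    also have "\<dots> = P (z0 + rep d) x" using P2 x s by blast
    also have "\<dots> = (P z0 x = P (rep d) x)" using P1 z0X rd x by blast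
    also have "\<dots> = (P x z0 = P x (rep d))" using P2 z0X rd x by metis
    also have "\<dots> = (\<not> P x (rep d))" using z0(2) by simp
    finally show ?thesis unfolding ee_def by simp
  qed
  have "(\<Sum>d\<in>cosq Y Z. - ee P x (rep d)) = (\<Sum>d\<in>cosq Y Z. ee P x (rep d))"
    by (rule sum.reindex_bij_witness[of _ t' t _ _ _], auto simp: tt' t't t_in t'_in flip)
  then have "(\<Sum>d\<in>cosq Y Z. ee P x (rep d)) = 0" by (simp add: sum_negf)
  then show ?thesis by (simp only: if_not_P[OF False])
qed

lemma sum_if_const: "(\<Sum>c\<in>A. if Q c then k else (0::int)) = k * int (card {c\<in>A. Q c})" if "finite A"
proof -
  have "(\<Sum>c\<in>A. if Q c then k else (0::int)) = (\<Sum>c\<in>{c\<in>A. Q c}. k)"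
    using sum.inter_filter[OF that, of "\<lambda>_. k" Q] by simp
  then show ?thesis by simp
qed

lemma char_count:
  assumes P1: "\<forall>a\<in>X. \<forall>b\<in>X. \<forall>c\<in>X. P (a+b) c = (P a c = P b c)"
    and P2: "\<forall>a\<in>X. \<forall>b\<in>X. P a b = P b a"
    and P3: "\<forall>a\<in>X. \<forall>y\<in>Y. P a y"
    and sX: "sg X" and sY: "sg Y" and sW: "sg W" and YW: "Y \<subseteq> W" and WX: "W \<subseteq> X"
    and fin: "finite (cosq Y X)"
    and nondeg: "\<forall>w\<in>W. (\<forall>x\<in>X. P w x) \<longrightarrow> w \<in> Y"
  shows "card (cosq Y W) * card (cosq Y {x\<in>X. \<forall>w\<in>W. P x w}) = card (cosq Y X)"
proof -
  define Wp where "Wp = {x\<in>X. \<forall>w\<in>W. P x w}"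
  have YX: "Y \<subseteq> X" using YW WX by blast
  have finW: "finite (cosq Y W)" using fin cosq_mono[OF WX] finite_subset by blast
  have "(\<Sum>c\<in>cosq Y X. \<Sum>d\<in>cosq Y W. ee P (rep c) (rep d))
      = (\<Sum>c\<in>cosq Y X. if \<forall>z\<in>W. P (rep c) z then int (card (cosq Y W)) else 0)"
  proof (rule sum.cong[OF refl])
    fix c assume "c \<in> cosq Y X"
    then have "rep c \<in> X" using cosq_rep(1)[OF sY sX YX] by blast
    then show "(\<Sum>d\<in>cosq Y W. ee P (rep c) (rep d)) =
      (if \<forall>z\<in>W. P (rep c) z then int (card (cosq Y W)) else 0)"
      by (rule flip_sum[OF P1 P2 P3 sX sY sW YW WX])
  qed
  also have "\<dots> = int (card (cosq Y W)) * int (card {c\<in>cosq Y X. \<forall>z\<in>W. P (rep c) z})"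
    by (rule sum_if_const[OF fin])
  also have "{c\<in>cosq Y X. \<forall>z\<in>W. P (rep c) z} = cosq Y Wp"
  proof
    show "{c\<in>cosq Y X. \<forall>z\<in>W. P (rep c) z} \<subseteq> cosq Y Wp"
    proof
      fix c assume c: "c \<in> {c\<in>cosq Y X. \<forall>z\<in>W. P (rep c) z}"
      then have "rep c \<in> Wp" unfolding Wp_def using cosq_rep(1)[OF sY sX YX] by blast
      then show "c \<in> cosq Y Wp" using cosq_rep(2)[OF sY sX YX] c unfolding cosq_def by blast
    qed
    show "cosq Y Wp \<subseteq> {c\<in>cosq Y X. \<forall>z\<in>W. P (rep c) z}"
    proof
      fix c assume "c \<in> cosq Y Wp"
      then obtain x where x: "x \<in> X" "\<forall>w\<in>W. P x w" "c = cst x Y" unfolding cosq_def Wp_def by blast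
      obtain y where y: "y \<in> Y" "rep c = x + y" using rep_cst[OF sY] x(3) by blast
      have "P (rep c) z" if "z \<in> W" for z
      proof -
        have zX: "z \<in> X" using that WX by blast
        have "P z (x + y) = P z x" by (rule P_shift[OF P1 P2 P3 sX YX zX x(1) y(1)])
        moreover have "P z (x + y) = P (x + y) z"
          using P2 zX sg_add[OF sX x(1), of y] y(1) YX by blast
        moreover have "P z x" using P2 zX x(1) x(2) that by blast
        ultimately show ?thesis using y(2) by simp
      qed
      moreover have "c \<in> cosq Y X" using x unfolding cosq_def by blast
      ultimately show "c \<in> {c\<in>cosq Y X. \<forall>z\<in>W. P (rep c) z}" by blast
    qed
  qed
  finally have A: "(\<Sum>c\<in>cosq Y X. \<Sum>d\<in>cosq Y W. ee P (rep c) (rep d))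
      = int (card (cosq Y W)) * int (card (cosq Y Wp))" .
  have "(\<Sum>c\<in>cosq Y X. \<Sum>d\<in>cosq Y W. ee P (rep c) (rep d))
      = (\<Sum>d\<in>cosq Y W. \<Sum>c\<in>cosq Y X. ee P (rep c) (rep d))" by (rule sum.swap)
  also have "\<dots> = (\<Sum>d\<in>cosq Y W. \<Sum>c\<in>cosq Y X. ee P (rep d) (rep c))"
  proof (intro sum.cong refl)
    fix d c assume d: "d \<in> cosq Y W" and c: "c \<in> cosq Y X"
    have "rep d \<in> X" using cosq_rep(1)[OF sY sW YW d] WX by blast
    moreover have "rep c \<in> X" using cosq_rep(1)[OF sY sX YX c] by blast
    ultimately show "ee P (rep c) (rep d) = ee P (rep d) (rep c)" unfolding ee_def using P2 by metis
  qed
  also have "\<dots> = (\<Sum>d\<in>cosq Y W. if \<forall>z\<in>X. P (rep d) z then int (card (cosq Y X)) else 0)"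
  proof (rule sum.cong[OF refl])
    fix d assume "d \<in> cosq Y W"
    then have "rep d \<in> X" using cosq_rep(1)[OF sY sW YW] WX by blast
    then show "(\<Sum>c\<in>cosq Y X. ee P (rep d) (rep c)) =
      (if \<forall>z\<in>X. P (rep d) z then int (card (cosq Y X)) else 0)"
      by (rule flip_sum[OF P1 P2 P3 sX sY sX YX order_refl])
  qed
  also have "\<dots> = int (card (cosq Y X)) * int (card {d\<in>cosq Y W. \<forall>z\<in>X. P (rep d) z})"
    by (rule sum_if_const[OF finW])
  also have "{d\<in>cosq Y W. \<forall>z\<in>X. P (rep d) z} = {Y}"
  proof
    show "{d\<in>cosq Y W. \<forall>z\<in>X. P (rep d) z} \<subseteq> {Y}"
    proof
      fix d assume d: "d \<in> {d\<in>cosq Y W. \<forall>z\<in>X. P (rep d) z}"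
      then have "rep d \<in> W" using cosq_rep(1)[OF sY sW YW] by blast
      then have "rep d \<in> Y" using nondeg d by blast
      then have "cst (rep d) Y = cst 0 Y" using cst_eq[OF sY] by simp
      then show "d \<in> {Y}" using cosq_rep(2)[OF sY sW YW] d cst0 by auto
    qed
    have Yin: "Y \<in> cosq Y W" unfolding cosq_def using sg0[OF sW] cst0[of Y] by (rule_tac x=0 in image_eqI) auto
    have "rep Y \<in> Y" using rep_cst_diff[OF sY, of 0] by (simp add: cst0)
    then have "\<forall>z\<in>X. P (rep Y) z" using P2 P3 YX by blast
    then show "{Y} \<subseteq> {d\<in>cosq Y W. \<forall>z\<in>X. P (rep d) z}" using Yin by blast
  qed
  finally have "int (card (cosq Y W)) * int (card (cosq Y Wp)) = int (card (cosq Y X))"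
    using A by simp
  then have "int (card (cosq Y W) * card (cosq Y Wp)) = int (card (cosq Y X))"
    by (simp only: of_nat_mult)
  then show ?thesis unfolding Wp_def by (simp only: of_nat_eq_iff)
qed

fun gen :: "'a::ab_group_add set \<Rightarrow> 'a list \<Rightarrow> 'a set" where
  "gen Y [] = Y"
| "gen Y (y#ys) = gen Y ys \<union> (\<lambda>z. y + z) ` gen Y ys"

lemma sg_ext:
  assumes Z: "sg Z" and yy: "y + y \<in> Z"
  shows "sg (Z \<union> (\<lambda>z. y + z) ` Z)"
  unfolding sg_def
proof (intro conjI ballI)
  show "0 \<in> Z \<union> (\<lambda>z. y + z) ` Z" using sg0[OF Z] by blast
next
  fix a b assume a: "a \<in> Z \<union> (\<lambda>z. y + z) ` Z" and b: "b \<in> Z \<union> (\<lambda>z. y + z) ` Z"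
  show "a + b \<in> Z \<union> (\<lambda>z. y + z) ` Z"
  proof (cases "a \<in> Z")
    case aZ: True
    show ?thesis
    proof (cases "b \<in> Z")
      case True then show ?thesis using sg_add[OF Z aZ True] by blast
    next
      case False
      then obtain b' where b': "b' \<in> Z" "b = y + b'" using b by blast
      have "a + b' \<in> Z" using sg_add[OF Z aZ b'(1)] .
      moreover have "a + b = y + (a + b')" using b' by (simp add: algebra_simps)
      ultimately show ?thesis by blast
    qed
  next
    case aN: False
    then obtain a' where a': "a' \<in> Z" "a = y + a'" using a by blast
    show ?thesis
    proof (cases "b \<in> Z")
      case True
      have "a' + b \<in> Z" using sg_add[OF Z a'(1) True] .
      moreover have "a + b = y + (a' + b)" using a' by (simp add: algebra_simps)
      ultimately show ?thesis by blast
    next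
      case False
      then obtain b' where b': "b' \<in> Z" "b = y + b'" using b by blast
      have "(y + y) + (a' + b') \<in> Z" using sg_add[OF Z yy sg_add[OF Z a'(1) b'(1)]] .
      moreover have "a + b = (y + y) + (a' + b')" using a' b' by (simp add: algebra_simps)
      ultimately show ?thesis by simp
    qed
  qed
next
  fix a assume a: "a \<in> Z \<union> (\<lambda>z. y + z) ` Z"
  show "- a \<in> Z \<union> (\<lambda>z. y + z) ` Z"
  proof (cases "a \<in> Z")
    case True then show ?thesis using sg_uminus[OF Z True] by blast
  next
    case False
    then obtain a' where a': "a' \<in> Z" "a = y + a'" using a by blast
    have "-(y + y) - a' \<in> Z" using sg_diff[OF Z sg_uminus[OF Z yy] a'(1)] .
    moreover have "- a = y + (-(y + y) - a')" using a' by (simp add: algebra_simps)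
    ultimately show ?thesis by blast
  qed
qed

lemma gen_props:
  assumes "sg Y" "\<forall>y\<in>set ys. y + y \<in> Y"
  shows "sg (gen Y ys) \<and> Y \<subseteq> gen Y ys \<and> set ys \<subseteq> gen Y ys"
  using assms(2)
proof (induction ys)
  case Nil then show ?case using assms(1) by simp
next
  case (Cons y ys)
  then have IH: "sg (gen Y ys)" "Y \<subseteq> gen Y ys" "set ys \<subseteq> gen Y ys" "y + y \<in> Y" by auto
  have "sg (gen Y (y#ys))" using sg_ext[OF IH(1)] IH(2,4) by auto
  moreover have "y \<in> gen Y (y#ys)" using sg0[OF IH(1)] by force
  ultimately show ?case using IH by auto
qed

lemma gen_sub:
  assumes "sg B" "Y \<subseteq> B" "set ys \<subseteq> B"
  shows "gen Y ys \<subseteq> B"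
  using assms(3)
proof (induction ys)
  case Nil then show ?case using assms(2) by simp
next
  case (Cons y ys)
  then have IH: "gen Y ys \<subseteq> B" "y \<in> B" by auto
  have "(\<lambda>z. y + z) ` gen Y ys \<subseteq> B" using IH sg_add[OF assms(1)] by blast
  then show ?case using IH by simp
qed

lemma cst_transl: "(\<lambda>z. y + z) ` cst a Y = cst (y + a) Y"
  unfolding cst_def by (auto simp: image_image add.assoc)

lemma cosq_ext: "cosq Y (Z \<union> (\<lambda>z. y + z) ` Z) = cosq Y Z \<union> (\<lambda>c. (\<lambda>z. y + z) ` c) ` cosq Y Z"
  unfolding cosq_def by (auto simp: image_image cst_transl)

lemma gen_card_le:
  assumes "sg Y" "\<forall>y\<in>set ys. y + y \<in> Y" "finite (cosq Y (gen Y ys))"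
  shows "card (cosq Y (gen Y ys)) \<le> 2 ^ length ys"
  using assms(2,3)
proof (induction ys)
  case Nil
  have "cosq Y Y = {Y}"
  proof -
    have "cst x Y = Y" if "x \<in> Y" for x
      using cst_eq[OF assms(1), of x 0] that cst0[of Y] by simp
    then show ?thesis unfolding cosq_def using sg0[OF assms(1)] by force
  qed
  then show ?case by simp
next
  case (Cons y ys)
  let ?Z = "gen Y ys"
  have e: "cosq Y (gen Y (y#ys)) = cosq Y ?Z \<union> (\<lambda>c. (\<lambda>z. y + z) ` c) ` cosq Y ?Z"
    using cosq_ext by simp
  have f: "finite (cosq Y ?Z)" using Cons.prems(2) e by simp
  have "card (cosq Y ?Z) \<le> 2 ^ length ys" using Cons f by simp
  moreover have "card (cosq Y (gen Y (y#ys))) \<le> card (cosq Y ?Z) + card (cosq Y ?Z)"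
    unfolding e using card_Un_le card_image_le[OF f] by (meson add_left_mono order_trans)
  ultimately show ?case by simp
qed

lemma gen_card_double:
  assumes sY: "sg Y" and sZ: "sg Z" and YZ: "Y \<subseteq> Z" and y: "y \<notin> Z" and fin: "finite (cosq Y Z)"
  shows "card (cosq Y (Z \<union> (\<lambda>z. y + z) ` Z)) = 2 * card (cosq Y Z)"
proof -
  have disj: "cosq Y Z \<inter> (\<lambda>c. (\<lambda>z. y + z) ` c) ` cosq Y Z = {}"
  proof (rule ccontr)
    assume "cosq Y Z \<inter> (\<lambda>c. (\<lambda>z. y + z) ` c) ` cosq Y Z \<noteq> {}"
    then obtain a b where ab: "a \<in> Z" "b \<in> Z" "cst a Y = cst (y + b) Y"
      unfolding cosq_def by (auto simp: cst_transl)
    then have "a - (y + b) \<in> Z" using cst_eq[OF sY] YZ by blast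
    then have "a - (a - (y + b)) - b \<in> Z" using sg_diff[OF sZ sg_diff[OF sZ ab(1)] ab(2)] by blast
    then show False using y by simp
  qed
  have inj: "inj_on (\<lambda>c. (\<lambda>z. y + z) ` c) (cosq Y Z)"
    by (rule inj_onI) (metis (no_types, lifting) add_left_imp_eq inj_image_eq_iff inj_onI)
  have "card (cosq Y (Z \<union> (\<lambda>z. y + z) ` Z)) = card (cosq Y Z) + card ((\<lambda>c. (\<lambda>z. y + z) ` c) ` cosq Y Z)"
    unfolding cosq_ext by (rule card_Un_disjoint[OF fin finite_imageI[OF fin] disj])
  also have "\<dots> = 2 * card (cosq Y Z)" using card_image[OF inj] by simp
  finally show ?thesis .
qed

lemma cosq_Y_nonempty: "sg Y \<Longrightarrow> Y \<subseteq> Z \<Longrightarrow> Y \<in> cosq Y Z"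
  unfolding cosq_def using sg0[of Y] cst0[of Y] by (rule_tac x=0 in image_eqI) auto

lemma greedy:
  assumes sY: "sg Y" and sX: "sg X" and YX: "Y \<subseteq> X" and two: "\<forall>x\<in>X. x + x \<in> Y"
    and fin: "finite (cosq Y X)"
  shows "\<exists>ys. set ys \<subseteq> X \<and> gen Y ys = X \<and> card (cosq Y X) = 2 ^ length ys"
proof -
  have main: "\<And>ys. set ys \<subseteq> X \<Longrightarrow> card (cosq Y (gen Y ys)) = 2 ^ length ys \<Longrightarrow>
     \<exists>ys'. set ys' \<subseteq> X \<and> gen Y ys' = X \<and> card (cosq Y X) = 2 ^ length ys'"
  proof -
    fix ys0 :: "'a list"
    show "set ys0 \<subseteq> X \<Longrightarrow> card (cosq Y (gen Y ys0)) = 2 ^ length ys0 \<Longrightarrow>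
     \<exists>ys'. set ys' \<subseteq> X \<and> gen Y ys' = X \<and> card (cosq Y X) = 2 ^ length ys'"
    proof (induction "card (cosq Y X) - card (cosq Y (gen Y ys0))" arbitrary: ys0 rule: less_induct)
      case (less ys)
      have yy: "\<forall>y\<in>set ys. y + y \<in> Y" using less.prems(1) two by blast
      have gp: "sg (gen Y ys)" "Y \<subseteq> gen Y ys" using gen_props[OF sY yy] by auto
      have gX: "gen Y ys \<subseteq> X" using gen_sub[OF sX YX less.prems(1)] .
      show ?case
      proof (cases "gen Y ys = X")
        case True then show ?thesis using less.prems by metis
      next
        case False
        then obtain y where y: "y \<in> X" "y \<notin> gen Y ys" using gX by blast
        let ?ys = "y # ys"
        have s1: "set ?ys \<subseteq> X" using less.prems(1) y(1) by simp
        have fg: "finite (cosq Y (gen Y ys))" using fin cosq_mono[OF gX] finite_subset by blast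
        have c2: "card (cosq Y (gen Y ?ys)) = 2 * card (cosq Y (gen Y ys))"
          using gen_card_double[OF sY gp(1) gp(2) y(2) fg] by simp
        have c2': "card (cosq Y (gen Y ?ys)) = 2 ^ length ?ys" using c2 less.prems(2) by simp
        have yy': "\<forall>y\<in>set ?ys. y + y \<in> Y" using s1 two by blast
        have gX': "gen Y ?ys \<subseteq> X" using gen_sub[OF sX YX s1] .
        have le: "card (cosq Y (gen Y ?ys)) \<le> card (cosq Y X)"
          by (rule card_mono[OF fin cosq_mono[OF gX']])
        have pos: "card (cosq Y (gen Y ys)) \<ge> 1"
          using cosq_Y_nonempty[OF sY gp(2)] fg by (metis One_nat_def Suc_leI card_gt_0_iff empty_iff)
        have "card (cosq Y X) - card (cosq Y (gen Y ?ys)) < card (cosq Y X) - card (cosq Y (gen Y ys))"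
          using le pos c2 by linarith
        then show ?thesis using less.hyps s1 c2' by blast
      qed
    qed
  qed
  have "cosq Y Y = {Y}"
  proof -
    have "cst x Y = Y" if "x \<in> Y" for x
      using cst_eq[OF sY, of x 0] that cst0[of Y] by simp
    then show ?thesis unfolding cosq_def using sg0[OF sY] by force
  qed
  then show ?thesis using main[of "[]"] by simp
qed

lemma sg_natmul: "sg B \<Longrightarrow> v \<in> B \<Longrightarrow> (of_nat n :: rat) *s (v::qvec) \<in> B"
proof (induction n)
  case 0 then show ?case using sg0 by simp
next
  case (Suc n)
  have "(of_nat (Suc n) :: rat) *s v = v + of_nat n *s v" by (simp add: vector_sadd_rdistrib)
  then show ?case using sg_add[OF Suc.prems(1) Suc.prems(2) Suc.IH[OF Suc.prems]] by simp
qed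

lemma sg_intmul: assumes "sg B" "v \<in> B" shows "(of_int c :: rat) *s (v::qvec) \<in> B"
proof (cases "c \<ge> 0")
  case True
  then obtain n where "c = int n" by (metis nonneg_eq_int)
  then show ?thesis using sg_natmul[OF assms] by simp
next
  case False
  then obtain n where n: "c = - int n" by (metis neg_int_cases linorder_not_le less_le)
  have "(of_int c :: rat) *s v = - ((of_nat n :: rat) *s v)" unfolding n by (simp add: vec_eq_iff)
  then show ?thesis using sg_uminus[OF assms(1) sg_natmul[OF assms]] by simp
qed

lemma chi_smult: "(\<chi> i. (a::rat) * v $ i) = a *s v"
  by (simp add: vec_eq_iff)

lemma zspan_least:
  assumes "sg B" "A \<subseteq> B" shows "zspan A \<subseteq> B"
proof
  fix x assume "x \<in> zspan A"
  then obtain cs :: "(int \<times> qvec) list" where cs: "\<forall>p\<in>set cs. snd p \<in> A"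
      "x = sum_list (map (\<lambda>p. (\<chi> i. of_int (fst p) * snd p $ i)) cs)"
    unfolding zspan_def by blast
  have "sum_list (map (\<lambda>p. (\<chi> i. of_int (fst p) * snd p $ i)) cs) \<in> B"
    using cs(1)
  proof (induction cs)
    case Nil then show ?case using sg0[OF assms(1)] by simp
  next
    case (Cons p cs)
    have "(\<chi> i. of_int (fst p) * snd p $ i) \<in> B"
      unfolding chi_smult using sg_intmul[OF assms(1)] Cons.prems assms(2) by auto
    then show ?case using Cons sg_add[OF assms(1)] by simp
  qed
  then show "x \<in> B" using cs(2) by simp
qed

lemma zspan_sup: "A \<subseteq> zspan A"
proof
  fix a assume "a \<in> A"
  then have "\<forall>p\<in>set [(1::int, a)]. snd p \<in> A"
    "a = sum_list (map (\<lambda>p. (\<chi> i. of_int (fst p) * snd p $ i)) [(1::int, a)])"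
    by (auto simp: vec_eq_iff)
  then show "a \<in> zspan A" unfolding zspan_def by blast
qed

lemma zspan_sg: "sg (zspan A)"
  unfolding sg_def
proof (intro conjI ballI)
  show "0 \<in> zspan A" unfolding zspan_def by (rule CollectI, rule exI[of _ "[]"]) simp
next
  fix x y assume "x \<in> zspan A" "y \<in> zspan A"
  then obtain cs ds :: "(int \<times> qvec) list" where
    "\<forall>p\<in>set cs. snd p \<in> A" "x = sum_list (map (\<lambda>p. (\<chi> i. of_int (fst p) * snd p $ i)) cs)"
    "\<forall>p\<in>set ds. snd p \<in> A" "y = sum_list (map (\<lambda>p. (\<chi> i. of_int (fst p) * snd p $ i)) ds)"
    unfolding zspan_def by blast
  then show "x + y \<in> zspan A" unfolding zspan_def
    by (intro CollectI exI[of _ "cs @ ds"]) auto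
next
  fix x assume "x \<in> zspan A"
  then obtain cs :: "(int \<times> qvec) list" where cs:
    "\<forall>p\<in>set cs. snd p \<in> A" "x = sum_list (map (\<lambda>p. (\<chi> i. of_int (fst p) * snd p $ i)) cs)"
    unfolding zspan_def by blast
  define ds where "ds = map (\<lambda>p. (- fst p, snd p)) cs"
  have "sum_list (map (\<lambda>p. (\<chi> i. of_int (fst p) * snd p $ i)) ds)
      = - sum_list (map (\<lambda>p. (\<chi> i. of_int (fst p) * snd p $ i)) cs)"
    unfolding ds_def by (induction cs) (auto simp: vec_eq_iff)
  moreover have "\<forall>p\<in>set ds. snd p \<in> A" using cs(1) unfolding ds_def by auto
  ultimately show "- x \<in> zspan A" unfolding zspan_def using cs(2) by auto
qed

lemma zspan_gen:
  assumes "sg Y" "\<forall>y\<in>set ys. y + y \<in> Y"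
  shows "zspan (Y \<union> set ys) = gen Y ys"
proof
  have gp: "sg (gen Y ys)" "Y \<subseteq> gen Y ys" "set ys \<subseteq> gen Y ys" using gen_props[OF assms] by auto
  show "zspan (Y \<union> set ys) \<subseteq> gen Y ys" using zspan_least[OF gp(1)] gp(2,3) by simp
  show "gen Y ys \<subseteq> zspan (Y \<union> set ys)"
    using gen_sub[OF zspan_sg] zspan_sup[of "Y \<union> set ys"] by blast
qed

lemma disc_length_eq:
  assumes sS: "sg S" and sD: "sg (dual S)" and SD: "S \<subseteq> dual S"
    and two: "\<forall>x\<in>dual S. x + x \<in> S" and fin: "finite (cosq S (dual S))"
  shows "card (cosq S (dual S)) = 2 ^ disc_length S"
proof -
  obtain ys where ys: "set ys \<subseteq> dual S" "gen S ys = dual S" "card (cosq S (dual S)) = 2 ^ length ys"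
    using greedy[OF sS sD SD two fin] by blast
  have "disc_length S = length ys"
    unfolding disc_length_def
  proof (rule Least_equality)
    have "\<forall>y\<in>set ys. y + y \<in> S" using ys(1) two by blast
    then show "\<exists>zs. length zs = length ys \<and> set zs \<subseteq> dual S \<and> dual S = zspan (S \<union> set zs)"
      using ys zspan_gen[OF sS] by metis
  next
    fix m assume "\<exists>zs. length zs = m \<and> set zs \<subseteq> dual S \<and> dual S = zspan (S \<union> set zs)"
    then obtain zs where zs: "length zs = m" "set zs \<subseteq> dual S" "dual S = zspan (S \<union> set zs)" by blast
    have zz: "\<forall>y\<in>set zs. y + y \<in> S" using zs(2) two by blast
    have g: "gen S zs = dual S" using zs(3) zspan_gen[OF sS zz] by simp
    have "card (cosq S (gen S zs)) \<le> 2 ^ length zs"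
      by (rule gen_card_le[OF sS zz]) (simp add: g fin)
    then have "(2::nat) ^ length ys \<le> 2 ^ m" using g ys(3) zs(1) by simp
    then show "length ys \<le> m" by simp
  qed
  then show ?thesis using ys(3) by simp
qed

lemma U8: "(UNIV::8 set) = {0,1,2,3,4,5,6,7}"
proof -
  have "card {0,1,2,3,4,5,6,7::8} = 8" by simp
  moreover have "card (UNIV::8 set) = 8" by simp
  ultimately show ?thesis by (metis card_subset_eq finite subset_UNIV)
qed

lemma all8: "(\<forall>i::8. P i) \<longleftrightarrow> P 0 \<and> P 1 \<and> P 2 \<and> P 3 \<and> P 4 \<and> P 5 \<and> P 6 \<and> P 7"
  by (metis UNIV_I U8 insert_iff empty_iff)

lemma bform_closed: "bform x y = x$0*y$1 + x$1*y$0 + x$2*y$3 + x$3*y$2 + x$4*y$5 + x$5*y$4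
   - 2*x$6*y$6 - 2*x$7*y$7"
  unfolding bform_def gramL_def U8 by (simp add: algebra_simps)

lemma bform_sym: "bform x y = bform y x"
  unfolding bform_closed by (simp add: algebra_simps)
lemma bform_add1: "bform (x + y) z = bform x z + bform y z"
  unfolding bform_closed by (simp add: algebra_simps)
lemma bform_add2: "bform z (x + y) = bform z x + bform z y"
  unfolding bform_closed by (simp add: algebra_simps)
lemma bform_diff1: "bform (x - y) z = bform x z - bform y z"
  unfolding bform_closed by (simp add: algebra_simps)
lemma bform_diff2: "bform z (x - y) = bform z x - bform z y"
  unfolding bform_closed by (simp add: algebra_simps)
lemma bform_neg1: "bform (- x) z = - bform x z"
  unfolding bform_closed by (simp add: algebra_simps)
lemma bform_neg2: "bform z (- x) = - bform z x"
  unfolding bform_closed by (simp add: algebra_simps)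
lemma bform_smult1: "bform (c *s x) z = c * bform x z"
  unfolding bform_closed by (simp add: algebra_simps)
lemma bform_smult2: "bform z (c *s x) = c * bform z x"
  unfolding bform_closed by (simp add: algebra_simps)
lemma bform_zero1: "bform 0 z = 0"
  unfolding bform_closed by simp
lemma bform_zero2: "bform z 0 = 0"
  unfolding bform_closed by simp

lemmas bform_lin = bform_add1 bform_add2 bform_diff1 bform_diff2 bform_neg1 bform_neg2
  bform_smult1 bform_smult2 bform_zero1 bform_zero2

lemma bform_axis: "bform x (axis 0 1) = x$1" "bform x (axis 1 1) = x$0"
  "bform x (axis 2 1) = x$3" "bform x (axis 3 1) = x$2"
  "bform x (axis 4 1) = x$5" "bform x (axis 5 1) = x$4"
  "bform x (axis 6 1) = -2 * x$6" "bform x (axis 7 1) = -2 * x$7"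
  unfolding bform_closed by (simp_all add: axis_def)

lemma latL_iff: "x \<in> latL \<longleftrightarrow> x$0 \<in> \<int> \<and> x$1 \<in> \<int> \<and> x$2 \<in> \<int> \<and> x$3 \<in> \<int> \<and> x$4 \<in> \<int>
   \<and> x$5 \<in> \<int> \<and> x$6 \<in> \<int> \<and> x$7 \<in> \<int>"
  unfolding latL_def using all8[of "\<lambda>i. x$i \<in> \<int>"] by simp

lemma axis_latL: "axis i 1 \<in> latL"
  unfolding latL_def axis_def by auto

lemma sg_latL: "sg latL"
  unfolding sg_def latL_def by auto

lemma bform_int: "x \<in> latL \<Longrightarrow> y \<in> latL \<Longrightarrow> bform x y \<in> \<int>"
  unfolding latL_iff bform_closed by (intro Ints_add Ints_diff Ints_mult Ints_numeral; simp)

lemma act_add: "act M (x + y) = act M x + act M y"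
  unfolding act_def by (simp add: matrix_vector_right_distrib)
lemma act_smult: "act M (c *s x) = c *s act M x"
  unfolding act_def by (simp add: vec_eq_iff matrix_vector_mult_def sum_distrib_left mult_ac)
lemma act_neg: "act M (- x) = - act M x"
  using act_smult[of M "-1" x] by (simp add: vector_sneg_minus1[symmetric])
lemma act_diff: "act M (x - y) = act M x - act M y"
  using act_add[of M x "-y"] act_neg[of M y] by simp
lemma act_zero: "act M 0 = 0"
  using act_smult[of M 0 0] by simp

lemma map_matrix_mul: "map_matrix (of_int :: int \<Rightarrow> rat) (A ** B) = map_matrix of_int A ** map_matrix of_int B"
  by (simp add: vec_eq_iff matrix_matrix_mult_def)

lemma map_matrix_transpose: "map_matrix f (transpose A) = transpose (map_matrix f A)"
  by (simp add: vec_eq_iff transpose_def)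

lemma map_matrix_mat1: "map_matrix (of_int :: int \<Rightarrow> rat) (mat 1) = mat 1"
  by (simp add: vec_eq_iff mat_def)

lemma act_comp: "act M (act N x) = act (M ** N) x"
  unfolding act_def map_matrix_mul by (simp add: matrix_vector_mul_assoc matrix_mul_assoc)

lemma act_id: "act (mat 1) x = x"
  unfolding act_def map_matrix_mat1 by simp

lemma act_latL: "x \<in> latL \<Longrightarrow> act M x \<in> latL"
  unfolding latL_def act_def matrix_vector_mult_def
  by (auto intro!: Ints_sum Ints_mult)

definition dot :: "qvec \<Rightarrow> qvec \<Rightarrow> rat" where "dot u v = (\<Sum>i\<in>UNIV. u$i * v$i)"

lemma dot_mv: "dot (A *v x) v = dot x (transpose A *v v)"
  unfolding dot_def matrix_vector_mult_def transpose_def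
  apply (simp add: sum_distrib_left sum_distrib_right)
  apply (subst sum.swap)
  apply (simp add: mult_ac)
  done

lemma bform_dot: "bform x y = dot x (map_matrix of_int gramL *v y)"
  unfolding bform_def dot_def matrix_vector_mult_def
  by (simp add: sum_distrib_left mult_ac)

lemma bform_act: assumes "M \<in> OL" shows "bform (act M x) (act M y) = bform x y"
proof -
  let ?Q = "map_matrix (of_int :: int \<Rightarrow> rat) M" and ?G = "map_matrix (of_int :: int \<Rightarrow> rat) gramL"
  have e: "transpose ?Q ** ?G ** ?Q = ?G"
  proof -
    have "map_matrix (of_int :: int \<Rightarrow> rat) (transpose M ** gramL ** M) = ?G"
      using assms unfolding OL_def by simp
    then show ?thesis by (simp only: map_matrix_mul map_matrix_transpose)
  qed
  have "bform (act M x) (act M y) = dot (?Q *v x) (?G *v (?Q *v y))"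
    unfolding bform_dot act_def ..
  also have "\<dots> = dot x (transpose ?Q *v (?G *v (?Q *v y)))" by (rule dot_mv)
  also have "\<dots> = dot x ((transpose ?Q ** ?G ** ?Q) *v y)" by (simp add: matrix_vector_mul_assoc matrix_mul_assoc)
  also have "\<dots> = bform x y" unfolding e bform_dot ..
  finally show ?thesis .
qed

lemma qspan_smult: "a \<in> A \<Longrightarrow> c *s a \<in> qspan A"
proof -
  assume a: "a \<in> A"
  have "\<forall>p\<in>set [(c, a)]. snd p \<in> A" "c *s a = sum_list (map (\<lambda>p. (\<chi> i. fst p * snd p $ i)) [(c, a)])"
    using a by (auto simp: vec_eq_iff)
  then show ?thesis unfolding qspan_def by blast
qed

lemma qspan_sub:
  assumes "0 \<in> V" "\<forall>x\<in>V. \<forall>y\<in>V. x + y \<in> V" "\<forall>c x. x \<in> V \<longrightarrow> c *s x \<in> V" "A \<subseteq> V"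
  shows "qspan A \<subseteq> V"
proof
  fix x assume "x \<in> qspan A"
  then obtain cs :: "(rat \<times> qvec) list" where cs: "\<forall>p\<in>set cs. snd p \<in> A"
      "x = sum_list (map (\<lambda>p. (\<chi> i. fst p * snd p $ i)) cs)"
    unfolding qspan_def by blast
  have "sum_list (map (\<lambda>p. (\<chi> i. fst p * snd p $ i)) cs) \<in> V"
    using cs(1)
  proof (induction cs)
    case Nil then show ?case using assms(1) by simp
  next
    case (Cons p cs)
    have "(\<chi> i. fst p * snd p $ i) \<in> V"
      unfolding chi_smult using assms(3,4) Cons.prems by auto
    then show ?case using Cons assms(2) by simp
  qed
  then show "x \<in> V" using cs(2) by simp
qed

lemma common_denom: "\<exists>d::int. d > 0 \<and> (of_int d :: rat) *s x \<in> latL"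
proof -
  define q where "q i = quotient_of (x$i)" for i
  define d where "d = (\<Prod>i\<in>UNIV. snd (q i))"
  have pos: "snd (q i) > 0" for i unfolding q_def by (rule quotient_of_denom_pos')
  have "d > 0" unfolding d_def using pos by (simp add: prod_pos)
  moreover have "of_int d * x$i \<in> \<int>" for i
  proof -
    have xi: "x$i = of_int (fst (q i)) / of_int (snd (q i))"
      unfolding q_def by (rule quotient_of_div) simp
    have "d = snd (q i) * (\<Prod>j\<in>UNIV - {i}. snd (q j))"
      unfolding d_def by (simp add: prod.remove)
    then have "of_int d * x$i = of_int (fst (q i)) * of_int (\<Prod>j\<in>UNIV - {i}. snd (q j))"
      using pos[of i] xi by simp
    moreover have "of_int (fst (q i)) * (\<Prod>j\<in>UNIV - {i}. (of_int (snd (q j)) :: rat)) \<in> \<int>"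
      by (intro Ints_mult Ints_of_int Ints_prod)
    ultimately show ?thesis by simp
  qed
  ultimately show ?thesis unfolding latL_def by auto
qed

lemma qspan_latL: "qspan latL = UNIV"
proof -
  have "x \<in> qspan latL" for x
  proof -
    obtain d :: int where d: "d > 0" "(of_int d :: rat) *s x \<in> latL" using common_denom by blast
    have "x = (1 / of_int d) *s ((of_int d :: rat) *s x)" using d(1) by (simp add: vector_smult_assoc)
    then show ?thesis using qspan_smult[OF d(2)] by metis
  qed
  then show ?thesis by blast
qed

abbreviation "Ld \<equiv> dual latL"

lemma Ld_iff: "x \<in> Ld \<longleftrightarrow> (\<forall>s\<in>latL. bform x s \<in> \<int>)"
  unfolding dual_def qspan_latL by simp

lemma latL_Ld: "latL \<subseteq> Ld"
  using Ld_iff bform_int by blast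

lemma Ld_coords: assumes "x \<in> Ld"
  shows "x$0 \<in> \<int>" "x$1 \<in> \<int>" "x$2 \<in> \<int>" "x$3 \<in> \<int>" "x$4 \<in> \<int>" "x$5 \<in> \<int>"
    "2 * x$6 \<in> \<int>" "2 * x$7 \<in> \<int>"
proof -
  have h: "bform x (axis i 1) \<in> \<int>" for i using assms axis_latL Ld_iff by blast
  show "x$0 \<in> \<int>" using h[of 1] bform_axis by simp
  show "x$1 \<in> \<int>" using h[of 0] bform_axis by simp
  show "x$2 \<in> \<int>" using h[of 3] bform_axis by simp
  show "x$3 \<in> \<int>" using h[of 2] bform_axis by simp
  show "x$4 \<in> \<int>" using h[of 5] bform_axis by simp
  show "x$5 \<in> \<int>" using h[of 4] bform_axis by simp
  show "2 * x$6 \<in> \<int>" using h[of 6] bform_axis Ints_minus by fastforce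
  show "2 * x$7 \<in> \<int>" using h[of 7] bform_axis Ints_minus by fastforce
qed

lemma Ld_two: "x \<in> Ld \<Longrightarrow> x + x \<in> latL"
  using Ld_coords[of x] unfolding latL_iff by (simp add: mult_2[symmetric] Ints_mult)

lemma half_axis_Ld: "(1/2 :: rat) *s axis i 1 \<in> Ld" if "i = 6 \<or> i = 7"
  unfolding Ld_iff
proof
  fix s assume "s \<in> latL"
  then have "s$6 \<in> \<int>" "s$7 \<in> \<int>" using latL_iff by auto
  then show "bform ((1/2 :: rat) *s axis i 1) s \<in> \<int>"
    using that unfolding bform_smult1 bform_sym[of "axis i 1"]
    by (auto simp: bform_axis Ints_minus)
qed

lemma dual_dual_L: assumes "\<forall>w\<in>Ld. bform z w \<in> \<int>" shows "z \<in> latL"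
proof -
  have h: "bform z (axis i 1) \<in> \<int>" for i using assms axis_latL latL_Ld by blast
  have h6: "bform z ((1/2 :: rat) *s axis 6 1) \<in> \<int>" using assms half_axis_Ld by blast
  have h7: "bform z ((1/2 :: rat) *s axis 7 1) \<in> \<int>" using assms half_axis_Ld by blast
  show ?thesis unfolding latL_iff
    using h[of 0] h[of 1] h[of 2] h[of 3] h[of 4] h[of 5] h6 h7
    by (simp add: bform_axis bform_smult2 Ints_minus minus_in_Ints_iff)
qed

lemma nondeg_L: assumes "\<forall>v\<in>latL. bform y v = 0" shows "y = 0"
proof -
  have h: "bform y (axis i 1) = 0" for i using assms axis_latL by blast
  show ?thesis unfolding vec_eq_iff all8
    using h[of 0] h[of 1] h[of 2] h[of 3] h[of 4] h[of 5] h[of 6] h[of 7]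
    by (simp add: bform_axis)
qed

lemma sg_Ld: "sg Ld"
  unfolding sg_def
proof (intro conjI ballI)
  show "0 \<in> Ld" unfolding Ld_iff bform_zero1 by simp
  fix x y assume "x \<in> Ld" "y \<in> Ld"
  then show "x + y \<in> Ld" unfolding Ld_iff bform_add1 by (simp add: Ints_add)
next
  fix x assume "x \<in> Ld"
  then show "- x \<in> Ld" unfolding Ld_iff bform_neg1 by (simp add: Ints_minus)
qed

lemma frac_eq_iff: "frac (a::rat) = frac b \<longleftrightarrow> a - b \<in> \<int>"
  using frac_diff_eq[of a b] frac_diff_zero[of a b] frac_eq_0_iff by metis

lemma half_notin: "(1/2 :: rat) \<notin> \<int>"
proof
  assume "(1/2 :: rat) \<in> \<int>"
  then obtain k where "(1/2 :: rat) = of_int k" by (metis Ints_cases)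
  then have "(1::rat) = 2 * of_int k" by simp
  then have "(1::int) = 2 * k" by (metis of_int_1 of_int_eq_iff of_int_mult of_int_numeral)
  then show False by presburger
qed

lemma half_int: assumes "2 * (a::rat) \<in> \<int>" shows "a \<in> \<int> \<or> a + 1/2 \<in> \<int>"
proof -
  obtain m where m: "2 * a = of_int m" using assms by (metis Ints_cases)
  show ?thesis
  proof (cases "even m")
    case True
    then obtain k where "m = 2 * k" by blast
    then have "a = of_int k" using m by simp
    then show ?thesis by simp
  next
    case False
    then obtain k where "m = 2 * k + 1" by (metis oddE)
    then have "a + 1/2 = of_int (k + 1)" using m by (simp add: field_simps)
    then show ?thesis by (metis Ints_of_int)
  qed
qed

lemma half_iff: assumes "2 * (a::rat) \<in> \<int>" "2 * b \<in> \<int>"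
  shows "a + b \<in> \<int> \<longleftrightarrow> (a \<in> \<int> \<longleftrightarrow> b \<in> \<int>)"
proof -
  have c1: "a \<in> \<int> \<Longrightarrow> (a + b \<in> \<int> \<longleftrightarrow> b \<in> \<int>)"
    by (metis Ints_add Ints_diff add_diff_cancel_left')
  have c2: "b \<in> \<int> \<Longrightarrow> (a + b \<in> \<int> \<longleftrightarrow> a \<in> \<int>)"
    by (metis Ints_add Ints_diff add_diff_cancel_right')
  have c3: "a \<notin> \<int> \<Longrightarrow> b \<notin> \<int> \<Longrightarrow> a + b \<in> \<int>"
  proof -
    assume "a \<notin> \<int>" "b \<notin> \<int>"
    then have h1: "a + 1/2 \<in> \<int>" and h2: "b + 1/2 \<in> \<int>" using half_int assms by blast+
    have "(a + 1/2) + (b + 1/2) - 1 \<in> \<int>" by (rule Ints_diff[OF Ints_add[OF h1 h2] Ints_1])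
    then show ?thesis by (simp add: algebra_simps)
  qed
  show ?thesis using c1 c2 c3 by blast
qed

lemma half_diff: assumes "2 * (a::rat) \<in> \<int>" "2 * b \<in> \<int>"
  shows "a - b \<in> \<int> \<longleftrightarrow> (a \<in> \<int> \<longleftrightarrow> b \<in> \<int>)"
proof -
  have "2 * (- b) \<in> \<int>" using assms(2) Ints_minus by fastforce
  then have "a + (- b) \<in> \<int> \<longleftrightarrow> (a \<in> \<int> \<longleftrightarrow> - b \<in> \<int>)" using half_iff[OF assms(1)] by blast
  then show ?thesis by (simp add: minus_in_Ints_iff)
qed

lemma finite_vecset: assumes "finite F" shows "finite {v :: rat ^ 8. \<forall>i. v$i \<in> F}"
proof -
  have "{v :: rat ^ 8. \<forall>i. v$i \<in> F} \<subseteq> vec_lambda ` (PiE UNIV (\<lambda>_. F))"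
  proof
    fix v :: "rat ^ 8" assume "v \<in> {v. \<forall>i. v$i \<in> F}"
    then have "vec_nth v \<in> PiE UNIV (\<lambda>_. F)" by auto
    then show "v \<in> vec_lambda ` (PiE UNIV (\<lambda>_. F))" by (metis image_eqI vec_nth_inverse)
  qed
  moreover have "finite (PiE (UNIV :: 8 set) (\<lambda>_. F))" using assms by (simp add: finite_PiE)
  ultimately show ?thesis using finite_subset by blast
qed

lemma latL_diff_iff: "x - y \<in> latL \<longleftrightarrow> (\<forall>i. frac (x$i) = frac (y$i))"
  unfolding latL_def frac_eq_iff by simp

lemma two_coord: assumes two: "\<forall>x\<in>X. x + x \<in> latL" and x: "x \<in> X" shows "2 * x$i \<in> \<int>"
proof -
      have "x + x \<in> latL" using two x(1) by (rule bspec)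
      then have "(x + x)$i \<in> \<int>" unfolding latL_def mem_Collect_eq by (rule spec)
      then have "x$i + x$i \<in> \<int>" by (simp only: vector_add_component)
      then show "2 * x$i \<in> \<int>" by (simp only: mult_2)
qed

lemma finite_cosq_half:
  assumes sY: "sg Y" and YL: "Y \<subseteq> latL" and two: "\<forall>x\<in>X. x + x \<in> latL"
    and prim: "\<forall>x\<in>X. \<forall>x'\<in>X. x - x' \<in> latL \<longrightarrow> x - x' \<in> Y"
  shows "finite (cosq Y X)"
proof -
  define G where "G x = (\<chi> i. frac (x$i))" for x :: qvec
  have ker: "\<forall>x\<in>X. \<forall>x'\<in>X. cst x Y = cst x' Y \<longleftrightarrow> G x = G x'"
  proof (intro ballI)
    fix x x' assume "x \<in> X" "x' \<in> X"
    then have "x - x' \<in> Y \<longleftrightarrow> x - x' \<in> latL" using prim YL by blast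
    then show "cst x Y = cst x' Y \<longleftrightarrow> G x = G x'"
      unfolding cst_eq[OF sY] latL_diff_iff G_def by (simp add: vec_eq_iff)
  qed
  have "G ` X \<subseteq> {v. \<forall>i. v$i \<in> {0, 1/2}}"
  proof
    fix v assume "v \<in> G ` X"
    then obtain x where x: "x \<in> X" "v = G x" by blast
    have "v$i \<in> {0, 1/2}" for i
    proof -
      have "2 * x$i \<in> \<int>" by (rule two_coord[OF two x(1)])
      then have "x$i \<in> \<int> \<or> x$i + 1/2 \<in> \<int>" by (rule half_int)
      moreover have "x$i + 1/2 \<in> \<int> \<Longrightarrow> frac (x$i) = 1/2"
      proof -
        assume "x$i + 1/2 \<in> \<int>"
        then have "x$i - 1/2 \<in> \<int>" using Ints_diff[of "x$i + 1/2" 1] by (simp add: algebra_simps)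
        then show "frac (x$i) = 1/2" unfolding frac_unique_iff by simp
      qed
      moreover have vi: "v$i = frac (x$i)" unfolding x(2) G_def by simp
      ultimately have "v$i = 0 \<or> v$i = 1/2" using frac_eq_0_iff[of "x$i"] by argo
      then show ?thesis by simp
    qed
    then show "v \<in> {v. \<forall>i. v$i \<in> {0, 1/2}}" by blast
  qed
  then have "finite (G ` X)" using finite_vecset[of "{0, 1/2}"] finite_subset by blast
  then show ?thesis unfolding cosq_def using card_same_kernel(2)[OF ker] by simp
qed

lemma card_LLd: "card (cosq latL Ld) = 4"
proof -
  define G where "G x = (x$6 \<in> \<int>, x$7 \<in> \<int>)" for x :: qvec
  have ker: "\<forall>x\<in>Ld. \<forall>x'\<in>Ld. cst x latL = cst x' latL \<longleftrightarrow> G x = G x'"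
  proof (intro ballI)
    fix x x' assume x: "x \<in> Ld" and x': "x' \<in> Ld"
    have "x - x' \<in> latL \<longleftrightarrow> (x$6 - x'$6 \<in> \<int> \<and> x$7 - x'$7 \<in> \<int>)"
      unfolding latL_iff using Ld_coords[OF x] Ld_coords[OF x'] by (simp add: Ints_diff)
    also have "\<dots> \<longleftrightarrow> G x = G x'"
      unfolding G_def using half_diff Ld_coords[OF x] Ld_coords[OF x'] by simp
    finally show "cst x latL = cst x' latL \<longleftrightarrow> G x = G x'" unfolding cst_eq[OF sg_latL] .
  qed
  let ?h6 = "(1/2 :: rat) *s axis (6::8) 1" and ?h7 = "(1/2 :: rat) *s axis (7::8) 1"
  have h6: "?h6 \<in> Ld" and h7: "?h7 \<in> Ld" using half_axis_Ld by auto
  have "G ` Ld = UNIV"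
  proof -
    have "G 0 = (True, True)" unfolding G_def by simp
    moreover have "G ?h6 = (False, True)" unfolding G_def using half_notin by (simp add: axis_def)
    moreover have "G ?h7 = (True, False)" unfolding G_def using half_notin by (simp add: axis_def)
    moreover have "G (?h6 + ?h7) = (False, False)" unfolding G_def using half_notin by (simp add: axis_def)
    moreover have "0 \<in> Ld" "?h6 + ?h7 \<in> Ld" using sg0[OF sg_Ld] sg_add[OF sg_Ld h6 h7] by auto
    ultimately have "{(True,True), (False,True), (True,False), (False,False)} \<subseteq> G ` Ld"
      using h6 h7 by (metis empty_subsetI image_eqI insert_subset)
    moreover have "(UNIV :: (bool \<times> bool) set) = {(True,True), (False,True), (True,False), (False,False)}"
      by auto
    ultimately show ?thesis by blast
  qed
  then show ?thesis unfolding cosq_def card_same_kernel(1)[OF ker] by (simp add: card_UNIV_bool)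
qed

locale invo =
  fixes g :: imat
  assumes gOL: "g \<in> OL" and gg: "g ** g = mat 1"
    and disc: "\<forall>w\<in>Ld. act g w - w \<in> latL"
begin

abbreviation A :: "qvec \<Rightarrow> qvec" where "A x \<equiv> act g x"

lemma AA: "A (A x) = x" using act_comp[of g g x] gg act_id by simp
lemma Biso: "bform (A x) (A y) = bform x y" by (rule bform_act[OF gOL])
lemma Badj: "bform (A x) y = bform x (A y)"
  using Biso[of x "A y"] AA by simp

definition "VS = {x. A x = - x}"
definition "VT = {x. A x = x}"
definition "S = {x\<in>latL. A x = - x}"
definition "T = {x\<in>latL. A x = x}"
definition "pS x = (1/2::rat) *s (x - A x)"
definition "pT x = (1/2::rat) *s (x + A x)"

lemma pS_pT: "pS x + pT x = x"
  unfolding pS_def pT_def by (simp add: vec_eq_iff field_simps)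
lemma A_pS: "A (pS x) = - pS x"
  unfolding pS_def by (simp add: act_smult act_diff AA vec_eq_iff field_simps)
lemma A_pT: "A (pT x) = pT x"
  unfolding pT_def by (simp add: act_smult act_add AA vec_eq_iff field_simps)
lemma pS_in: "pS x \<in> VS" unfolding VS_def using A_pS by simp
lemma pT_in: "pT x \<in> VT" unfolding VT_def using A_pT by simp
lemma pS_VS: "x \<in> VS \<Longrightarrow> pS x = x" unfolding VS_def pS_def by (simp add: vec_eq_iff field_simps)
lemma pS_VT: "x \<in> VT \<Longrightarrow> pS x = 0" unfolding VT_def pS_def by (simp add: vec_eq_iff)
lemma pT_VT: "x \<in> VT \<Longrightarrow> pT x = x" unfolding VT_def pT_def by (simp add: vec_eq_iff field_simps)
lemma pT_VS: "x \<in> VS \<Longrightarrow> pT x = 0" unfolding VS_def pT_def by (simp add: vec_eq_iff)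
lemma pS_add: "pS (x + y) = pS x + pS y" unfolding pS_def by (simp add: act_add vec_eq_iff field_simps)
lemma pT_add: "pT (x + y) = pT x + pT y" unfolding pT_def by (simp add: act_add vec_eq_iff field_simps)
lemma pS_diff: "pS (x - y) = pS x - pS y" unfolding pS_def by (simp add: act_diff vec_eq_iff field_simps)
lemma pT_diff: "pT (x - y) = pT x - pT y" unfolding pT_def by (simp add: act_diff vec_eq_iff field_simps)
lemma pS_neg: "pS (- x) = - pS x" unfolding pS_def by (simp add: act_neg vec_eq_iff field_simps)
lemma pT_neg: "pT (- x) = - pT x" unfolding pT_def by (simp add: act_neg vec_eq_iff field_simps)
lemma pS_zero: "pS 0 = 0" unfolding pS_def by (simp add: act_zero)
lemma pT_zero: "pT 0 = 0" unfolding pT_def by (simp add: act_zero)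

lemma B_VS: assumes "u \<in> VS" shows "bform u y = bform u (pS y)"
proof -
  have "bform u (A y) = - bform u y" using Badj[of u y] assms unfolding VS_def by (simp add: bform_neg1)
  then show ?thesis unfolding pS_def by (simp add: bform_smult2 bform_diff2)
qed
lemma B_VT: assumes "u \<in> VT" shows "bform u y = bform u (pT y)"
proof -
  have "bform u (A y) = bform u y" using Badj[of u y] assms unfolding VT_def by simp
  then show ?thesis unfolding pT_def by (simp add: bform_smult2 bform_add2)
qed
lemma B_pS: "bform (pS x) y = bform x (pS y)"
  unfolding pS_def by (simp add: bform_smult1 bform_smult2 bform_diff1 bform_diff2 Badj)

lemma VS_smult: "x \<in> VS \<Longrightarrow> c *s x \<in> VS" unfolding VS_def by (simp add: act_smult)
lemma VT_smult: "x \<in> VT \<Longrightarrow> c *s x \<in> VT" unfolding VT_def by (simp add: act_smult)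
lemma VS_add: "x \<in> VS \<Longrightarrow> y \<in> VS \<Longrightarrow> x + y \<in> VS" unfolding VS_def by (simp add: act_add)
lemma VT_add: "x \<in> VT \<Longrightarrow> y \<in> VT \<Longrightarrow> x + y \<in> VT" unfolding VT_def by (simp add: act_add)
lemma VS_diff: "x \<in> VS \<Longrightarrow> y \<in> VS \<Longrightarrow> x - y \<in> VS" unfolding VS_def by (simp add: act_diff)
lemma VT_diff: "x \<in> VT \<Longrightarrow> y \<in> VT \<Longrightarrow> x - y \<in> VT" unfolding VT_def by (simp add: act_diff)
lemma VS_neg: "x \<in> VS \<Longrightarrow> - x \<in> VS" unfolding VS_def by (simp add: act_neg)
lemma VT_neg: "x \<in> VT \<Longrightarrow> - x \<in> VT" unfolding VT_def by (simp add: act_neg)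
lemma VS_zero: "0 \<in> VS" unfolding VS_def by (simp add: act_zero)
lemma VT_zero: "0 \<in> VT" unfolding VT_def by (simp add: act_zero)

lemma S_iff: "x \<in> S \<longleftrightarrow> x \<in> latL \<and> x \<in> VS" unfolding S_def VS_def by simp
lemma T_iff: "x \<in> T \<longleftrightarrow> x \<in> latL \<and> x \<in> VT" unfolding T_def VT_def by simp

lemma sg_S: "sg S"
  unfolding sg_def
proof (intro conjI ballI)
  show "0 \<in> S" unfolding S_iff using sg0[OF sg_latL] VS_zero by simp
next
  fix x y assume "x \<in> S" "y \<in> S"
  then show "x + y \<in> S" unfolding S_iff using sg_add[OF sg_latL, of x y] VS_add[of x y] by simp
next
  fix x assume "x \<in> S"
  then show "- x \<in> S" unfolding S_iff using sg_uminus[OF sg_latL, of x] VS_neg[of x] by simp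
qed
lemma sg_T: "sg T"
  unfolding sg_def
proof (intro conjI ballI)
  show "0 \<in> T" unfolding T_iff using sg0[OF sg_latL] VT_zero by simp
next
  fix x y assume "x \<in> T" "y \<in> T"
  then show "x + y \<in> T" unfolding T_iff using sg_add[OF sg_latL, of x y] VT_add[of x y] by simp
next
  fix x assume "x \<in> T"
  then show "- x \<in> T" unfolding T_iff using sg_uminus[OF sg_latL, of x] VT_neg[of x] by simp
qed

lemma disc_S: "w \<in> Ld \<Longrightarrow> w - A w \<in> S"
proof -
  assume w: "w \<in> Ld"
  have "A w - w \<in> latL" using disc w by blast
  then have "w - A w \<in> latL" using sg_uminus[OF sg_latL] by fastforce
  moreover have "A (w - A w) = - (w - A w)" by (simp add: act_diff AA)
  ultimately show ?thesis unfolding S_def by blast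
qed

lemma disc_T: "w \<in> Ld \<Longrightarrow> w + A w \<in> T"
proof -
  assume w: "w \<in> Ld"
  have "A w - w \<in> latL" using disc w by blast
  moreover have "w + w \<in> latL" using Ld_two[OF w] .
  ultimately have "(w + w) + (A w - w) \<in> latL" using sg_add[OF sg_latL] by blast
  then have "w + A w \<in> latL" by (simp add: algebra_simps)
  moreover have "A (w + A w) = w + A w" by (simp add: act_add AA)
  ultimately show ?thesis unfolding T_def by blast
qed

lemma qspan_S: "qspan S = VS"
proof
  show "qspan S \<subseteq> VS"
    by (rule qspan_sub) (auto simp: VS_zero VS_add VS_smult S_iff)
  show "VS \<subseteq> qspan S"
  proof
    fix x assume x: "x \<in> VS"
    obtain d :: int where d: "d > 0" "(of_int d :: rat) *s x \<in> latL" using common_denom by blast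
    have "(of_int d :: rat) *s x \<in> S" using d(2) VS_smult[OF x] S_iff by blast
    moreover have "x = (1 / of_int d) *s ((of_int d :: rat) *s x)" using d(1) by (simp add: vector_smult_assoc)
    ultimately show "x \<in> qspan S" using qspan_smult by metis
  qed
qed

lemma qspan_T: "qspan T = VT"
proof
  show "qspan T \<subseteq> VT"
    by (rule qspan_sub) (auto simp: VT_zero VT_add VT_smult T_iff)
  show "VT \<subseteq> qspan T"
  proof
    fix x assume x: "x \<in> VT"
    obtain d :: int where d: "d > 0" "(of_int d :: rat) *s x \<in> latL" using common_denom by blast
    have "(of_int d :: rat) *s x \<in> T" using d(2) VT_smult[OF x] T_iff by blast
    moreover have "x = (1 / of_int d) *s ((of_int d :: rat) *s x)" using d(1) by (simp add: vector_smult_assoc)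
    ultimately show "x \<in> qspan T" using qspan_smult by metis
  qed
qed

lemma Sd_iff: "x \<in> dual S \<longleftrightarrow> x \<in> VS \<and> (\<forall>s\<in>S. bform x s \<in> \<int>)"
  unfolding dual_def qspan_S by simp
lemma Td_iff: "x \<in> dual T \<longleftrightarrow> x \<in> VT \<and> (\<forall>s\<in>T. bform x s \<in> \<int>)"
  unfolding dual_def qspan_T by simp

lemma two_S: assumes x: "x \<in> dual S" shows "x + x \<in> S"
proof -
  have xV: "x \<in> VS" using x Sd_iff by blast
  have "bform (x + x) w \<in> \<int>" if w: "w \<in> Ld" for w
  proof -
    have "bform x (A w) = - bform x w" using Badj[of x w] xV unfolding VS_def by (simp add: bform_neg1)
    then have "bform (x + x) w = bform x (w - A w)"
      using bform_add1[of x x w] bform_diff2[of x w "A w"] by simp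
    moreover have "bform x (w - A w) \<in> \<int>" using x disc_S[OF w] Sd_iff by blast
    ultimately show ?thesis by simp
  qed
  then have "x + x \<in> latL" using dual_dual_L by blast
  then show ?thesis using S_iff VS_add[OF xV xV] by blast
qed

lemma two_T: assumes x: "x \<in> dual T" shows "x + x \<in> T"
proof -
  have xV: "x \<in> VT" using x Td_iff by blast
  have "bform (x + x) w \<in> \<int>" if w: "w \<in> Ld" for w
  proof -
    have "bform x (A w) = bform x w" using Badj[of x w] xV unfolding VT_def by simp
    then have "bform (x + x) w = bform x (w + A w)"
      using bform_add1[of x x w] bform_add2[of x w "A w"] by simp
    moreover have "bform x (w + A w) \<in> \<int>" using x disc_T[OF w] Td_iff by blast
    ultimately show ?thesis by simp
  qed
  then have "x + x \<in> latL" using dual_dual_L by blast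
  then show ?thesis using T_iff VT_add[OF xV xV] by blast
qed

lemma pS_Sd: assumes "w \<in> Ld" shows "pS w \<in> dual S"
  unfolding Sd_iff
proof (intro conjI ballI)
  show "pS w \<in> VS" by (rule pS_in)
  fix s assume s: "s \<in> S"
  then have "pS s = s" using pS_VS S_iff by blast
  then have "bform (pS w) s = bform w s" using B_pS by metis
  moreover have "s \<in> latL" using s S_iff by blast
  ultimately show "bform (pS w) s \<in> \<int>" using assms Ld_iff by simp
qed

lemma pT_Td: assumes "w \<in> Ld" shows "pT w \<in> dual T"
  unfolding Td_iff
proof (intro conjI ballI)
  show "pT w \<in> VT" by (rule pT_in)
  fix s assume s: "s \<in> T"
  then have sV: "s \<in> VT" using T_iff by blast
  have "bform (pT w) s = bform s (pT w)" by (rule bform_sym)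
  also have "\<dots> = bform s w" using B_VT[OF sV] by simp
  also have "\<dots> = bform w s" by (rule bform_sym)
  finally have "bform (pT w) s = bform w s" .
  moreover have "s \<in> latL" using s T_iff by blast
  ultimately show "bform (pT w) s \<in> \<int>" using assms Ld_iff by simp
qed

lemma dd_S: assumes x: "x \<in> VS" and h: "\<forall>y\<in>dual S. bform x y \<in> \<int>" shows "x \<in> S"
proof -
  have "bform x w \<in> \<int>" if "w \<in> Ld" for w
    using B_VS[OF x, of w] h pS_Sd[OF that] by simp
  then have "x \<in> latL" using dual_dual_L by blast
  then show ?thesis using x S_iff by blast
qed

lemma dd_T: assumes x: "x \<in> VT" and h: "\<forall>y\<in>dual T. bform x y \<in> \<int>" shows "x \<in> T"
proof -
  have "bform x w \<in> \<int>" if "w \<in> Ld" for w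
    using B_VT[OF x, of w] h pT_Td[OF that] by simp
  then have "x \<in> latL" using dual_dual_L by blast
  then show ?thesis using x T_iff by blast
qed

lemma S_Sd: "S \<subseteq> dual S"
proof
  fix s assume "s \<in> S"
  then have "s \<in> Ld" "pS s = s" using latL_Ld S_iff pS_VS by auto
  then show "s \<in> dual S" using pS_Sd by metis
qed

lemma T_Td: "T \<subseteq> dual T"
proof
  fix s assume "s \<in> T"
  then have "s \<in> Ld" "pT s = s" using latL_Ld T_iff pT_VT by auto
  then show "s \<in> dual T" using pT_Td by metis
qed

lemma sg_Sd: "sg (dual S)"
  unfolding sg_def
proof (intro conjI ballI)
  show "0 \<in> dual S" unfolding Sd_iff using VS_zero by (simp add: bform_zero1)
next
  fix x y assume "x \<in> dual S" "y \<in> dual S"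
  then show "x + y \<in> dual S" unfolding Sd_iff using VS_add by (simp add: bform_add1 Ints_add)
next
  fix x assume "x \<in> dual S"
  then show "- x \<in> dual S" unfolding Sd_iff using VS_neg by (simp add: bform_neg1)
qed

lemma sg_Td: "sg (dual T)"
  unfolding sg_def
proof (intro conjI ballI)
  show "0 \<in> dual T" unfolding Td_iff using VT_zero by (simp add: bform_zero1)
next
  fix x y assume "x \<in> dual T" "y \<in> dual T"
  then show "x + y \<in> dual T" unfolding Td_iff using VT_add by (simp add: bform_add1 Ints_add)
next
  fix x assume "x \<in> dual T"
  then show "- x \<in> dual T" unfolding Td_iff using VT_neg by (simp add: bform_neg1)
qed

lemma fin_S: "finite (cosq S (dual S))"
proof (rule finite_cosq_half[OF sg_S])
  show "S \<subseteq> latL" using S_iff by blast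
  show "\<forall>x\<in>dual S. x + x \<in> latL" using two_S unfolding S_iff by simp
  show "\<forall>x\<in>dual S. \<forall>x'\<in>dual S. x - x' \<in> latL \<longrightarrow> x - x' \<in> S"
  proof (intro ballI impI)
    fix x x' assume "x \<in> dual S" "x' \<in> dual S" "x - x' \<in> latL"
    then show "x - x' \<in> S" unfolding S_iff Sd_iff using VS_diff[of x x'] by simp
  qed
qed

lemma fin_T: "finite (cosq T (dual T))"
proof (rule finite_cosq_half[OF sg_T])
  show "T \<subseteq> latL" using T_iff by blast
  show "\<forall>x\<in>dual T. x + x \<in> latL" using two_T unfolding T_iff by simp
  show "\<forall>x\<in>dual T. \<forall>x'\<in>dual T. x - x' \<in> latL \<longrightarrow> x - x' \<in> T"
  proof (intro ballI impI)
    fix x x' assume "x \<in> dual T" "x' \<in> dual T" "x - x' \<in> latL"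
    then show "x - x' \<in> T" unfolding T_iff Td_iff using VT_diff[of x x'] by simp
  qed
qed

lemma len_S: "card (cosq S (dual S)) = 2 ^ disc_length S"
  by (rule disc_length_eq[OF sg_S sg_Sd S_Sd _ fin_S]) (use two_S in blast)

lemma len_T: "card (cosq T (dual T)) = 2 ^ disc_length T"
  by (rule disc_length_eq[OF sg_T sg_Td T_Td _ fin_T]) (use two_T in blast)

end

context invo begin

definition "PL = pS ` latL"
definition "Hs = Ld \<inter> VS"
definition "M = {x. pS x \<in> S \<and> pT x \<in> T}"
definition "Md = {x. pS x \<in> dual S \<and> pT x \<in> dual T}"

abbreviation "Pz x y \<equiv> bform x y \<in> \<int>"

lemma sg_PL: "sg PL"
  unfolding sg_def PL_def
proof (intro conjI ballI)
  show "0 \<in> pS ` latL" using sg0[OF sg_latL] pS_zero by (metis image_eqI)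
next
  fix x y assume "x \<in> pS ` latL" "y \<in> pS ` latL"
  then obtain a b where "a \<in> latL" "b \<in> latL" "x = pS a" "y = pS b" by blast
  then show "x + y \<in> pS ` latL" using sg_add[OF sg_latL, of a b] pS_add[of a b] by (metis image_eqI)
next
  fix x assume "x \<in> pS ` latL"
  then obtain a where "a \<in> latL" "x = pS a" by blast
  then show "- x \<in> pS ` latL" using sg_uminus[OF sg_latL, of a] pS_neg[of a] by (metis image_eqI)
qed

lemma sg_Hs: "sg Hs"
  unfolding sg_def Hs_def
proof (intro conjI ballI)
  show "0 \<in> Ld \<inter> VS" using sg0[OF sg_Ld] VS_zero by simp
next
  fix x y assume "x \<in> Ld \<inter> VS" "y \<in> Ld \<inter> VS"
  then show "x + y \<in> Ld \<inter> VS" using sg_add[OF sg_Ld, of x y] VS_add[of x y] by simp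
next
  fix x assume "x \<in> Ld \<inter> VS"
  then show "- x \<in> Ld \<inter> VS" using sg_uminus[OF sg_Ld, of x] VS_neg[of x] by simp
qed

lemma sg_M: "sg M"
  unfolding sg_def M_def
proof (intro conjI ballI)
  show "0 \<in> {x. pS x \<in> S \<and> pT x \<in> T}" using sg0[OF sg_S] sg0[OF sg_T] pS_zero pT_zero by simp
next
  fix x y assume "x \<in> {x. pS x \<in> S \<and> pT x \<in> T}" "y \<in> {x. pS x \<in> S \<and> pT x \<in> T}"
  then show "x + y \<in> {x. pS x \<in> S \<and> pT x \<in> T}"
    using sg_add[OF sg_S, of "pS x" "pS y"] sg_add[OF sg_T, of "pT x" "pT y"] pS_add pT_add by simp
next
  fix x assume "x \<in> {x. pS x \<in> S \<and> pT x \<in> T}"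
  then show "- x \<in> {x. pS x \<in> S \<and> pT x \<in> T}"
    using sg_uminus[OF sg_S, of "pS x"] sg_uminus[OF sg_T, of "pT x"] pS_neg pT_neg by simp
qed

lemma sg_Md: "sg Md"
  unfolding sg_def Md_def
proof (intro conjI ballI)
  show "0 \<in> {x. pS x \<in> dual S \<and> pT x \<in> dual T}" using sg0[OF sg_Sd] sg0[OF sg_Td] pS_zero pT_zero by simp
next
  fix x y assume "x \<in> {x. pS x \<in> dual S \<and> pT x \<in> dual T}" "y \<in> {x. pS x \<in> dual S \<and> pT x \<in> dual T}"
  then show "x + y \<in> {x. pS x \<in> dual S \<and> pT x \<in> dual T}"
    using sg_add[OF sg_Sd, of "pS x" "pS y"] sg_add[OF sg_Td, of "pT x" "pT y"] pS_add pT_add by simp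
next
  fix x assume "x \<in> {x. pS x \<in> dual S \<and> pT x \<in> dual T}"
  then show "- x \<in> {x. pS x \<in> dual S \<and> pT x \<in> dual T}"
    using sg_uminus[OF sg_Sd, of "pS x"] sg_uminus[OF sg_Td, of "pT x"] pS_neg pT_neg by simp
qed

lemma half_P1:
  assumes "\<forall>a\<in>X. \<forall>c\<in>X. 2 * bform a c \<in> \<int>"
  shows "\<forall>a\<in>X. \<forall>b\<in>X. \<forall>c\<in>X. Pz (a+b) c = (Pz a c = Pz b c)"
proof (intro ballI)
  fix a b c assume "a \<in> X" "b \<in> X" "c \<in> X"
  then have "2 * bform a c \<in> \<int>" "2 * bform b c \<in> \<int>" using assms by blast+
  then show "Pz (a+b) c = (Pz a c = Pz b c)" unfolding bform_add1 by (rule half_iff)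
qed

lemma Psym: "\<forall>a\<in>X. \<forall>b\<in>X. Pz a b = Pz b a" using bform_sym by simp

lemma twice: "2 * bform a c = bform (a + a) c" by (simp only: bform_add1 mult_2)

lemma S_PL: "S \<subseteq> PL"
proof
  fix s assume "s \<in> S"
  then have "s \<in> latL" "pS s = s" using S_iff pS_VS by auto
  then show "s \<in> PL" unfolding PL_def by (metis image_eqI)
qed

lemma PL_Sd: "PL \<subseteq> dual S"
  unfolding PL_def using pS_Sd latL_Ld by blast

lemma Hs_eq: "{x\<in>dual S. \<forall>w\<in>PL. Pz x w} = Hs"
proof (rule equalityI; rule subsetI)
  fix x assume x: "x \<in> {x\<in>dual S. \<forall>w\<in>PL. Pz x w}"
  then have xV: "x \<in> VS" using Sd_iff by blast
  have "Pz x v" if "v \<in> latL" for v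
  proof -
    have "Pz x (pS v)" using x that unfolding PL_def by blast
    then show ?thesis using B_VS[OF xV, of v] by simp
  qed
  then have "x \<in> Ld" using Ld_iff by blast
  then show "x \<in> Hs" unfolding Hs_def using xV by blast
next
  fix x assume "x \<in> Hs"
  then have x: "x \<in> Ld" "x \<in> VS" unfolding Hs_def by auto
  have "x \<in> dual S" unfolding Sd_iff using x Ld_iff S_iff by blast
  moreover have "Pz x w" if wP: "w \<in> PL" for w
  proof -
    obtain v where v: "v \<in> latL" "w = pS v" using wP unfolding PL_def by blast
    have "Pz x v" using x(1) v(1) Ld_iff by blast
    then show ?thesis using B_VS[OF x(2), of v] v(2) by simp
  qed
  ultimately show "x \<in> {x\<in>dual S. \<forall>w\<in>PL. Pz x w}" by blast
qed

lemma step_i: "card (cosq S PL) * card (cosq S Hs) = card (cosq S (dual S))"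
proof -
  have two: "\<forall>a\<in>dual S. \<forall>c\<in>dual S. 2 * bform a c \<in> \<int>"
  proof (intro ballI)
    fix a c assume "a \<in> dual S" "c \<in> dual S"
    then have "Pz c (a + a)" using two_S Sd_iff by blast
    then show "2 * bform a c \<in> \<int>" unfolding twice using bform_sym[of c "a+a"] by simp
  qed
  have P3: "\<forall>a\<in>dual S. \<forall>y\<in>S. Pz a y" using Sd_iff by blast
  have nd: "\<forall>w\<in>PL. (\<forall>x\<in>dual S. Pz w x) \<longrightarrow> w \<in> S"
    using dd_S pS_in unfolding PL_def by blast
  show ?thesis
    using char_count[OF half_P1[OF two] Psym P3 sg_Sd sg_S sg_PL S_PL PL_Sd fin_S nd]
    unfolding Hs_eq .
qed

lemma step_vi: "card (cosq M Md) = card (cosq S (dual S)) * card (cosq T (dual T))"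
  "finite (cosq M Md)"
proof -
  define G where "G x = (cst (pS x) S, cst (pT x) T)" for x
  have ker: "\<forall>x\<in>Md. \<forall>x'\<in>Md. cst x M = cst x' M \<longleftrightarrow> G x = G x'"
  proof (intro ballI)
    fix x x' assume "x \<in> Md" "x' \<in> Md"
    have "cst x M = cst x' M \<longleftrightarrow> x - x' \<in> M" by (rule cst_eq[OF sg_M])
    also have "\<dots> \<longleftrightarrow> pS x - pS x' \<in> S \<and> pT x - pT x' \<in> T" unfolding M_def by (simp add: pS_diff pT_diff)
    also have "\<dots> \<longleftrightarrow> G x = G x'" unfolding G_def using cst_eq[OF sg_S] cst_eq[OF sg_T] by simp
    finally show "cst x M = cst x' M \<longleftrightarrow> G x = G x'" .
  qed
  have img: "G ` Md = cosq S (dual S) \<times> cosq T (dual T)"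
  proof
    show "G ` Md \<subseteq> cosq S (dual S) \<times> cosq T (dual T)"
      unfolding G_def Md_def cosq_def by auto
    show "cosq S (dual S) \<times> cosq T (dual T) \<subseteq> G ` Md"
    proof
      fix p assume "p \<in> cosq S (dual S) \<times> cosq T (dual T)"
      then obtain s t where st: "s \<in> dual S" "t \<in> dual T" "p = (cst s S, cst t T)"
        unfolding cosq_def by blast
      have sV: "s \<in> VS" and tV: "t \<in> VT" using st Sd_iff Td_iff by auto
      have ps: "pS (s + t) = s" using pS_add pS_VS[OF sV] pS_VT[OF tV] by simp
      have pt: "pT (s + t) = t" using pT_add pT_VS[OF sV] pT_VT[OF tV] by simp
      have "s + t \<in> Md" unfolding Md_def using ps pt st by simp
      moreover have "G (s + t) = p" unfolding G_def ps pt st(3) ..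
      ultimately show "p \<in> G ` Md" by (metis image_eqI)
    qed
  qed
  show "card (cosq M Md) = card (cosq S (dual S)) * card (cosq T (dual T))"
    unfolding cosq_def card_same_kernel(1)[OF ker] img[unfolded cosq_def]
    by (simp add: card_cartesian_product)
  show "finite (cosq M Md)"
    unfolding cosq_def card_same_kernel(2)[OF ker] img[unfolded cosq_def]
    using fin_S fin_T unfolding cosq_def by simp
qed

lemma intM: assumes m: "m \<in> M" and c: "c \<in> Md" shows "Pz m c"
proof -
  have "bform m c = bform (pS m + pT m) c" using pS_pT[of m] by simp
  also have "\<dots> = bform (pS m) c + bform (pT m) c" by (rule bform_add1)
  also have "\<dots> = bform (pS m) (pS c) + bform (pT m) (pT c)"
    using B_VS[OF pS_in[of m], of c] B_VT[OF pT_in[of m], of c] by simp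
  finally have e: "bform m c = bform (pS c) (pS m) + bform (pT c) (pT m)"
    using bform_sym[of "pS m" "pS c"] bform_sym[of "pT m" "pT c"] by simp
  have "pS c \<in> dual S" "pT c \<in> dual T" "pS m \<in> S" "pT m \<in> T"
    using m c unfolding M_def Md_def by auto
  then have "Pz (pS c) (pS m)" "Pz (pT c) (pT m)" using Sd_iff Td_iff by auto
  then show ?thesis unfolding e by (rule Ints_add)
qed

lemma M_L: "M \<subseteq> latL"
proof
  fix x assume "x \<in> M"
  then have "pS x \<in> latL" "pT x \<in> latL" unfolding M_def S_iff T_iff by auto
  then show "x \<in> latL" using sg_add[OF sg_latL, of "pS x" "pT x"] pS_pT[of x] by simp
qed

lemma L_Md: "latL \<subseteq> Md"
  unfolding Md_def using pS_Sd pT_Td latL_Ld by blast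

lemma Ld_Md: "Ld \<subseteq> Md"
  unfolding Md_def using pS_Sd pT_Td by blast

lemma step_ii: "card (cosq M latL) * card (cosq M Ld) = card (cosq M Md)"
proof -
  have two: "\<forall>a\<in>Md. \<forall>c\<in>Md. 2 * bform a c \<in> \<int>"
  proof (intro ballI)
    fix a c assume a: "a \<in> Md" and c: "c \<in> Md"
    have "pS a + pS a \<in> S" "pT a + pT a \<in> T"
      using a two_S two_T unfolding Md_def by auto
    then have "pS (a + a) \<in> S" "pT (a + a) \<in> T" by (simp_all only: pS_add pT_add)
    then have "a + a \<in> M" unfolding M_def by simp
    then show "2 * bform a c \<in> \<int>" unfolding twice using intM c by blast
  qed
  have P3: "\<forall>a\<in>Md. \<forall>y\<in>M. Pz a y"
  proof (intro ballI)
    fix a y assume "a \<in> Md" "y \<in> M"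
    then show "Pz a y" using intM[of y a] bform_sym[of a y] by simp
  qed
  have nd: "\<forall>w\<in>latL. (\<forall>x\<in>Md. Pz w x) \<longrightarrow> w \<in> M"
  proof (intro ballI impI)
    fix w assume w: "w \<in> latL" and h: "\<forall>x\<in>Md. Pz w x"
    have "pS w \<in> S"
    proof (rule dd_S[OF pS_in], intro ballI)
      fix y assume y: "y \<in> dual S"
      then have yV: "y \<in> VS" using Sd_iff by blast
      have "y \<in> Md" unfolding Md_def using y pS_VS[OF yV] pT_VS[OF yV] sg0[OF sg_Td] by simp
      then have "Pz w y" using h by blast
      then show "Pz (pS w) y" using B_pS[of w y] pS_VS[OF yV] by simp
    qed
    moreover have "pT w \<in> T"
    proof (rule dd_T[OF pT_in], intro ballI)
      fix y assume y: "y \<in> dual T"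
      then have yV: "y \<in> VT" using Td_iff by blast
      have "y \<in> Md" unfolding Md_def using y pT_VT[OF yV] pS_VT[OF yV] sg0[OF sg_Sd] by simp
      then have "Pz w y" using h by blast
      have "bform (pT w) y = bform y (pT w)" by (rule bform_sym)
      also have "\<dots> = bform y w" using B_VT[OF yV, of w] by simp
      also have "\<dots> = bform w y" by (rule bform_sym)
      finally show "Pz (pT w) y" using \<open>Pz w y\<close> by simp
    qed
    ultimately show "w \<in> M" unfolding M_def by simp
  qed
  have Wp: "{x\<in>Md. \<forall>w\<in>latL. Pz x w} = Ld"
    using Ld_Md Ld_iff by blast
  show ?thesis
    using char_count[OF half_P1[OF two] Psym P3 sg_Md sg_M sg_latL M_L L_Md step_vi(2) nd]
    unfolding Wp .
qed

lemma step_v: "card (cosq M latL) = card (cosq S PL)"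
proof -
  have ker: "\<forall>x\<in>latL. \<forall>x'\<in>latL. cst x M = cst x' M \<longleftrightarrow> cst (pS x) S = cst (pS x') S"
  proof (intro ballI)
    fix x x' assume x: "x \<in> latL" and x': "x' \<in> latL"
    have d: "x - x' \<in> latL" using sg_diff[OF sg_latL x x'] .
    have "cst x M = cst x' M \<longleftrightarrow> x - x' \<in> M" by (rule cst_eq[OF sg_M])
    also have "\<dots> \<longleftrightarrow> pS (x - x') \<in> S"
    proof
      assume "x - x' \<in> M" then show "pS (x - x') \<in> S" unfolding M_def by simp
    next
      assume h: "pS (x - x') \<in> S"
      have "pT (x - x') = (x - x') - pS (x - x')" using pS_pT[of "x - x'"] by (simp add: algebra_simps)
      moreover have "(x - x') - pS (x - x') \<in> latL" using sg_diff[OF sg_latL d] h S_iff by blast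
      ultimately have "pT (x - x') \<in> latL" by simp
      then have "pT (x - x') \<in> T" using T_iff pT_in by blast
      then show "x - x' \<in> M" unfolding M_def using h by simp
    qed
    also have "\<dots> \<longleftrightarrow> cst (pS x) S = cst (pS x') S" using cst_eq[OF sg_S] pS_diff by simp
    finally show "cst x M = cst x' M \<longleftrightarrow> cst (pS x) S = cst (pS x') S" .
  qed
  have "cosq S PL = (\<lambda>x. cst (pS x) S) ` latL" unfolding cosq_def PL_def by (simp add: image_image)
  then show ?thesis unfolding cosq_def[of M] using card_same_kernel(1)[OF ker] by simp
qed

lemma main_count: "card (cosq T (dual T)) * card (cosq S Hs) ^ 2 = 4 * card (cosq S (dual S))"
proof -
  define a where "a = card (cosq S (dual S))"
  define b where "b = card (cosq T (dual T))"
  define p where "p = card (cosq S PL)"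
  define h where "h = card (cosq S Hs)"
  have i: "p * h = a" unfolding p_def h_def a_def by (rule step_i)
  have tw: "card (cosq M Ld) = 4 * card (cosq M latL)"
    using tower[OF sg_M sg_latL sg_Ld M_L latL_Ld] card_LLd by simp
  have ii: "p * (4 * p) = a * b"
    using step_ii step_vi(1) step_v tw unfolding a_def b_def p_def by simp
  have ppos: "p > 0"
  proof -
    have "finite (cosq S PL)" using fin_S cosq_mono[OF PL_Sd] finite_subset by blast
    moreover have "S \<in> cosq S PL" by (rule cosq_Y_nonempty[OF sg_S S_PL])
    ultimately show ?thesis unfolding p_def card_gt_0_iff by blast
  qed
  have "p * (4 * p) = p * (h * b)" using ii i by (simp add: mult_ac)
  then have hb: "4 * p = h * b" using ppos by simp
  have "h * (h * b) = h * (4 * p)" by (simp only: hb)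
  also have "\<dots> = 4 * (p * h)" by (simp only: mult_ac)
  finally have "h * (h * b) = 4 * a" using i by simp
  then show ?thesis unfolding a_def b_def h_def by (simp add: power2_eq_square mult_ac)
qed

end

context invo begin

lemma B_ST: assumes "u \<in> VS" "v \<in> VT" shows "bform u v = 0"
proof -
  have "bform u v = bform (A u) (A v)" using Biso by simp
  also have "\<dots> = - bform u v" using assms unfolding VS_def VT_def by (simp add: bform_neg1)
  finally show ?thesis by simp
qed

lemma coinv_eq: "{x\<in>latL. \<forall>y\<in>T. bform x y = 0} = S"
proof (rule equalityI; rule subsetI)
  fix x assume "x \<in> S"
  then have "x \<in> latL" "x \<in> VS" using S_iff by auto
  then show "x \<in> {x\<in>latL. \<forall>y\<in>T. bform x y = 0}" using B_ST T_iff by blast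
next
  fix x assume x: "x \<in> {x\<in>latL. \<forall>y\<in>T. bform x y = 0}"
  then have xL: "x \<in> latL" and orth: "\<forall>y\<in>T. bform x y = 0" by auto
  define y0 where "y0 = x + A x"
  have y0V: "y0 \<in> VT" unfolding y0_def VT_def by (simp add: act_add AA)
  have "bform y0 v = 0" if v: "v \<in> latL" for v
  proof -
    have vT: "v + A v \<in> T" unfolding T_iff VT_def
      using sg_add[OF sg_latL v act_latL[OF v]] by (simp add: act_add AA)
    have "A (v + A v) = v + A v" by (simp add: act_add AA)
    then have "bform (A x) (v + A v) = bform x (v + A v)" using Badj[of x "v + A v"] by simp
    then have "bform y0 (v + A v) = 0" unfolding y0_def bform_add1 using orth vT by simp
    moreover have "bform y0 (pT v) = (1/2) * bform y0 (v + A v)" unfolding pT_def by (rule bform_smult2)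
    ultimately have "bform y0 (pT v) = 0" by simp
    then show ?thesis using B_VT[OF y0V, of v] by simp
  qed
  then have "y0 = 0" using nondeg_L by blast
  then have "A x = - x" unfolding y0_def by (simp add: add_eq_0_iff)
  then show "x \<in> S" unfolding S_def using xL by simp
qed

end

lemma card_carrier_iso: "G \<cong> H \<Longrightarrow> card (carrier G) = card (carrier H)"
  unfolding is_iso_def iso_def using bij_betw_same_card by blast

theorem proposition4p3:
  fixes G :: "(int ^ 8 ^ 8) set"
  assumes "is_subgroup_OL G"
    and "card G = 2"
    and "trivial_on_disc G"
  shows "(card (carrier (emb_grp (coinvL G))) = 1 \<longrightarrow>
            int (disc_length (invL G)) = int (disc_length (coinvL G)) + 2)
       \<and> (emb_grp (coinvL G) \<cong> integer_mod_group 2 \<longrightarrow>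
            disc_length (invL G) = disc_length (coinvL G))
       \<and> (emb_grp (coinvL G) \<cong> integer_mod_group 2 \<times>\<times> integer_mod_group 2 \<longrightarrow>
            int (disc_length (invL G)) = int (disc_length (coinvL G)) - 2)"
proof -
  have sub: "G \<subseteq> OL" and one: "mat 1 \<in> G" and inv: "\<forall>a\<in>G. \<exists>b\<in>G. a ** b = mat 1 \<and> b ** a = mat 1"
    using assms(1) unfolding is_subgroup_OL_def by auto
  obtain a b where ab: "G = {a, b}" "a \<noteq> b" using assms(2) card_2_iff by metis
  obtain g where gG: "g \<in> G" and G_eq: "G = {mat 1, g}"
    using ab one by blast
  have gOL: "g \<in> OL" using sub gG by blast
  have gg: "g ** g = mat 1"
  proof -
    obtain h where h: "h \<in> G" "g ** h = mat 1" using inv gG by blast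
    show ?thesis
    proof (cases "h = mat 1")
      case True
      then have "g = mat 1" using h(2) by simp
      then show ?thesis by simp
    next
      case False
      then have "h = g" using h(1) G_eq by blast
      then show ?thesis using h(2) by simp
    qed
  qed
  have disc: "\<forall>w\<in>Ld. act g w - w \<in> latL"
    using assms(3) gG unfolding trivial_on_disc_def by blast
  interpret invo g using gOL gg disc by unfold_locales
  have invL_eq: "invL G = T"
    unfolding invL_def T_def G_eq using act_id by auto
  have coinvL_eq: "coinvL G = S"
    unfolding coinvL_def invL_eq using coinv_eq .
  have carr: "carrier (emb_grp (coinvL G)) = cosq S Hs"
    unfolding coinvL_eq emb_grp_def quot_grp_def Hs_def qspan_S cosq_def
    by (simp add: coset_def cst_def)
  define dS where "dS = disc_length S"
  define dT where "dT = disc_length T"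
  define h where "h = card (cosq S Hs)"
  have E: "2 ^ dT * h ^ 2 = (2::nat) ^ (dS + 2)"
    using main_count len_S len_T unfolding dS_def dT_def h_def by (simp add: power_add mult_ac)
  have "h = 1 \<longrightarrow> int dT = int dS + 2"
  proof
    assume "h = 1"
    then have "(2::nat) ^ dT = 2 ^ (dS + 2)" using E by simp
    then have "dT = dS + 2" by (rule power_inject_exp[THEN iffD1, rotated]) simp
    then show "int dT = int dS + 2" by simp
  qed
  moreover have "h = 2 \<longrightarrow> dT = dS"
  proof
    assume "h = 2"
    then have "(2::nat) ^ (dT + 2) = 2 ^ (dS + 2)" using E by (simp add: power_add)
    then show "dT = dS" by simp
  qed
  moreover have "h = 4 \<longrightarrow> int dT = int dS - 2"
  proof
    assume "h = 4"
    then have "(2::nat) ^ (dT + 4) = 2 ^ (dS + 2)" using E by (simp add: power_add)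
    then have "dT + 4 = dS + 2" by (rule power_inject_exp[THEN iffD1, rotated]) simp
    then show "int dT = int dS - 2" by simp
  qed
  moreover have "emb_grp (coinvL G) \<cong> integer_mod_group 2 \<Longrightarrow> h = 2"
    using card_carrier_iso carr unfolding h_def by (fastforce simp: carrier_integer_mod_group)
  moreover have "emb_grp (coinvL G) \<cong> integer_mod_group 2 \<times>\<times> integer_mod_group 2 \<Longrightarrow> h = 4"
    using card_carrier_iso carr unfolding h_def
    by (fastforce simp: carrier_integer_mod_group card_cartesian_product)
  ultimately show ?thesis
    using carr invL_eq coinvL_eq unfolding h_def dS_def dT_def by auto
qed

end
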